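(* Let $(\Omega,\mathcal{F},\mathbb{P})$ be a probability space and $Y_1,\dots,Y_T$ random vectors in $\mathbb{R}^{n_y}$ with $\mathbb{E}[\|Y_i\|_2^k]<\infty$ for all $i$ and all $k\in\mathbb{N}$. Fix $x_0$, $\tau\in(0,1)$, $v\in B(0,\rho_{\max})$ and a nominal control $u\in U$ left continuous at $\tau$; let $x^\epsilon$ be the random trajectory under $u^\epsilon$ and observations $y_i=Y_i(\omega)$, and $x=x^0$. Then $$\frac{\partial_+}{\partial\epsilon}\mathbb{E}\left[\int_\tau^T c(x^\epsilon(t),u^\epsilon(t))\,dt\right]\Bigg|_{\epsilon=0}=\mathbb{E}\left[\int_\tau^T\frac{\partial}{\partial x}c(x(t),u(t))^{\mathrm{T}}\Psi(t)\,dt\right],$$ where $\Psi(t)=\lim_{\epsilon\to0^+}(x^\epsilon(t)-x(t))/\epsilon$ (computed pathwise) is the state variation.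
   Context: Fix positive integers $T,m,n_x,n_y$ and $\rho_{\max}\in(0,\infty)$; $B(0,\rho_{\max})$ is the closed Euclidean ball of radius $\rho_{\max}$ in $\mathbb{R}^m$; $U$ is the set of piecewise continuous $u:[0,T]\to\mathbb{R}^m$ with $\|u(t)\|_2\le\rho_{\max}$ for all $t$. $f:\mathbb{R}^{n_x}\times\mathbb{R}^m\to\mathbb{R}^{n_x}$ is continuously differentiable and there is $K_1\in[1,\infty)$ with $\|f(x',u')-f(x'',u'')\|_2\le K_1(\|x'-x''\|_2+\|u'-u''\|_2)$ for all $x',x''$ and $u',u''\in B(0,\rho_{\max})$. $g:\mathbb{R}^{n_x}\times\mathbb{R}^{n_y}\to\mathbb{R}^{n_x}$ is continuous and differentiable in its first argument, and there are $K_2,\dots,K_5\ge0$ and positive integers $L_1,L_2$ such that for all $x,y$ both $\|g(x,y)\|_2$ and $\|\frac{\partial}{\partial x}g(x,y)\|_2$ are at most $K_2+K_3\|x\|_2^{L_1}+K_4\|y\|_2^{L_2}+K_5\|x\|_2^{L_1}\|y\|_2^{L_2}$. For a control $w\in U$ and observations $(y_1,\dots,y_T)$ the hybrid trajectory from $x_0$ is: $x_1$ on $[0,1]$ solves $\dot x_1=f(x_1,w)$, $x_1(0)=x_0$; for $i=2,\dots,T$, $x_i$ on $[i-1,i]$ solves $\dot x_i=f(x_i,w)$ with $x_i(i-1)=g(x_{i-1}(i-1),y_{i-1})$; $x(t)=x_i(t)$ for $t\in[i-1,i)$, and $x(T)=g(x_T(T),y_T)$. Perturbed control: for $\epsilon\in[0,\tau]$,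 $u^\epsilon(t)=v$ if $t\in(\tau-\epsilon,\tau]$ and $u^\epsilon(t)=u(t)$ otherwise. Costs: $c:\mathbb{R}^{n_x}\times\mathbb{R}^m\to\mathbb{R}$ is continuous and continuously differentiable in $x$, and there are $K_6,K_7\ge0$ and a positive integer $L_3$ such that $|c(x,u)|$ and $\|\frac{\partial}{\partial x}c(x,u)\|_2$ are at most $K_6+K_7\|x\|_2^{L_3}$ for all $x$ and $u\in B(0,\rho_{\max})$. *)

theory Defs
  imports "HOL-Analysis.Analysis" "HOL-Probability.Probability"
begin

definition piecewise_continuous_on :: "real \<Rightarrow> real \<Rightarrow> (real \<Rightarrow> 'a::real_normed_vector) \<Rightarrow> bool" where
  "piecewise_continuous_on a b u \<longleftrightarrow>
     (\<exists>S. finite S \<and>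
        (\<forall>t\<in>{a..b} - S. continuous (at t within {a..b}) u) \<and>
        (\<forall>s\<in>S. (\<exists>l. (u \<longlongrightarrow> l) (at s within {a..<s})) \<and>
                (\<exists>l. (u \<longlongrightarrow> l) (at s within {s<..b}))))"

definition admissible_controls :: "nat \<Rightarrow> real \<Rightarrow> (real \<Rightarrow> 'm::euclidean_space) set" where
  "admissible_controls T \<rho> =
     {u. piecewise_continuous_on 0 (real T) u \<and> (\<forall>t\<in>{0..real T}. norm (u t) \<le> \<rho>)}"

definition needle :: "(real \<Rightarrow> 'm) \<Rightarrow> real \<Rightarrow> 'm \<Rightarrow> real \<Rightarrow> real \<Rightarrow> 'm" where
  "needle u \<tau> v \<epsilon> t = (if t \<in> {\<tau> - \<epsilon><..\<tau>} then v else u t)"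

text \<open>Solution on [t0,t1] of  x' = f(x, w(t)),  x(t0) = z  (integral/Caratheodory sense,
  the natural notion for piecewise continuous w); extended by z outside [t0,t1].\<close>
definition ode_sol :: "('x::euclidean_space \<Rightarrow> 'm \<Rightarrow> 'x) \<Rightarrow> (real \<Rightarrow> 'm) \<Rightarrow> real \<Rightarrow> real \<Rightarrow> 'x \<Rightarrow> real \<Rightarrow> 'x" where
  "ode_sol f w t0 t1 z = (THE \<phi>. continuous_on {t0..t1} \<phi> \<and>
      (\<forall>t\<in>{t0..t1}. \<phi> t = z + integral {t0..t} (\<lambda>s. f (\<phi> s) (w s))) \<and>
      (\<forall>t. t \<notin> {t0..t1} \<longrightarrow> \<phi> t = z))"

text \<open>hyb_start ... i = x_i(i-1) (initial value of the i-th segment, i \<ge> 1).\<close>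
fun hyb_start :: "('x::euclidean_space \<Rightarrow> 'm \<Rightarrow> 'x) \<Rightarrow> ('x \<Rightarrow> 'y \<Rightarrow> 'x) \<Rightarrow> (real \<Rightarrow> 'm)
                  \<Rightarrow> (nat \<Rightarrow> 'y) \<Rightarrow> 'x \<Rightarrow> nat \<Rightarrow> 'x" where
  "hyb_start f g w ys x0 0 = x0"
| "hyb_start f g w ys x0 (Suc 0) = x0"
| "hyb_start f g w ys x0 (Suc (Suc i)) =
     g (ode_sol f w (real i) (real (Suc i)) (hyb_start f g w ys x0 (Suc i)) (real (Suc i))) (ys (Suc i))"

definition hyb_seg :: "('x::euclidean_space \<Rightarrow> 'm \<Rightarrow> 'x) \<Rightarrow> ('x \<Rightarrow> 'y \<Rightarrow> 'x) \<Rightarrow> (real \<Rightarrow> 'm)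
                  \<Rightarrow> (nat \<Rightarrow> 'y) \<Rightarrow> 'x \<Rightarrow> nat \<Rightarrow> real \<Rightarrow> 'x" where
  "hyb_seg f g w ys x0 i = ode_sol f w (real i - 1) (real i) (hyb_start f g w ys x0 i)"

definition hyb_traj :: "('x::euclidean_space \<Rightarrow> 'm \<Rightarrow> 'x) \<Rightarrow> ('x \<Rightarrow> 'y \<Rightarrow> 'x) \<Rightarrow> nat \<Rightarrow> (real \<Rightarrow> 'm)
                  \<Rightarrow> (nat \<Rightarrow> 'y) \<Rightarrow> 'x \<Rightarrow> real \<Rightarrow> 'x" where
  "hyb_traj f g T w ys x0 t =
     (if t = real T then g (hyb_seg f g w ys x0 T (real T)) (ys T)
      else hyb_seg f g w ys x0 (nat \<lfloor>t\<rfloor> + 1) t)"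

end

theory Submission
  imports Defs
begin

lemma pc_integrable:
  fixes h :: "real \<Rightarrow> 'a::euclidean_space"
  assumes S: "finite S" and c: "continuous_on ({a..b} - S) h"
    and B: "\<And>s. s \<in> {a..b} \<Longrightarrow> norm (h s) \<le> B"
  shows "h integrable_on {a..b}"
proof -
  have L: "{a..b} - S \<in> sets lebesgue"
    using S by (intro sets.Diff) (auto intro: negligible_imp_sets negligible_finite)
  have m: "h \<in> borel_measurable (lebesgue_on ({a..b} - S))"
    using continuous_imp_measurable_on_sets_lebesgue[OF c L] .
  have ci: "(\<lambda>_. B) integrable_on ({a..b} - S)"
    by (rule integrable_spike_set[of _ "{a..b}"]) (auto intro: negligible_subset[OF negligible_finite[OF S]])
  have "h integrable_on ({a..b} - S)"
    by (rule measurable_bounded_by_integrable_imp_integrable[OF m ci _ L]) (use B in auto)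
  then show ?thesis
    by (rule integrable_spike_set) (auto intro: negligible_subset[OF negligible_finite[OF S]])
qed

lemma gronwall:
  fixes d :: "real \<Rightarrow> real"
  assumes cd: "continuous_on {a..b} d" and K: "0 \<le> K"
    and le: "\<And>t. t \<in> {a..b} \<Longrightarrow> d t \<le> C + K * integral {a..t} d"
    and t: "t \<in> {a..b}"
  shows "d t \<le> C * exp (K * (t - a))"
proof (cases "K = 0")
  case True
  then show ?thesis using le[OF t] by simp
next
  case False
  then have K: "K > 0" using K by simp
  define I where "I = (\<lambda>t. integral {a..t} d)"
  define h where "h = (\<lambda>t. exp (- K * (t - a)) * (I t + C / K))"
  have dI: "(I has_real_derivative d s) (at s within {a..t})" if "s \<in> {a..t}" for s
  proof -
    have "(I has_vector_derivative d s) (at s within {a..b})"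
      unfolding I_def by (rule integral_has_vector_derivative[OF cd]) (use that t in auto)
    then have "(I has_vector_derivative d s) (at s within {a..t})"
      by (rule has_vector_derivative_within_subset) (use t in auto)
    then show ?thesis by (simp add: has_real_derivative_iff_has_vector_derivative)
  qed
  have dh: "(h has_real_derivative (exp (- K * (s - a)) * (d s - K * I s - C))) (at s within {a..t})"
    if "s \<in> {a..t}" for s
  proof -
    have "(h has_real_derivative (exp (- K * (s - a)) * (- K) * (I s + C / K) + exp (- K * (s - a)) * d s)) (at s within {a..t})"
      unfolding h_def
      by (auto intro!: derivative_eq_intros dI[OF that])
    moreover have "exp (- K * (s - a)) * (- K) * (I s + C / K) + exp (- K * (s - a)) * d s
        = exp (- K * (s - a)) * (d s - K * I s - C)"
      using K by (simp add: field_simps)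
    ultimately show ?thesis by simp
  qed
  have at: "a \<le> t" using t by simp
  obtain s where s: "s \<in> {a..t}" and eq: "h t - h a = (exp (- K * (s - a)) * (d s - K * I s - C)) * (t - a)"
    using mvt_very_simple[OF at, of h "\<lambda>s x. (exp (- K * (s - a)) * (d s - K * I s - C)) * x"]
      dh by (auto simp: has_field_derivative_def)
  have "d s - K * I s - C \<le> 0" using le[of s] s t unfolding I_def by auto
  then have "h t - h a \<le> 0" unfolding eq using at
    by (intro mult_nonpos_nonneg mult_nonneg_nonpos) auto
  moreover have "h a = C / K" by (simp add: h_def I_def)
  ultimately have "exp (- K * (t - a)) * (I t + C / K) \<le> C / K" by (simp add: h_def)
  then have "exp (K * (t - a)) * (exp (- K * (t - a)) * (I t + C / K)) \<le> exp (K * (t - a)) * (C / K)"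
    by (intro mult_left_mono) auto
  moreover have "exp (K * (t - a)) * exp (- K * (t - a)) = 1"
    by (simp add: exp_add[symmetric])
  ultimately have "I t + C / K \<le> C / K * exp (K * (t - a))"
    by (metis (no_types, lifting) mult.assoc mult.commute mult_1)
  then have "K * (I t + C / K) \<le> K * (C / K * exp (K * (t - a)))"
    using K by (intro mult_left_mono) auto
  then have "C + K * I t \<le> C * exp (K * (t - a))"
    using K by (simp add: distrib_left)
  then show ?thesis using le[OF t] unfolding I_def by simp
qed

lemma pow_aux: "x ^ n + real n * x ^ (n - Suc 0) * x = (1 + real n) * (x::real) ^ n"
  by (cases n) (auto simp: algebra_simps)

lemma integral_pow_shift:
  assumes "a \<le> t"
  shows "integral {a..t} (\<lambda>s. (s - a) ^ n) = (t - a) ^ Suc n / real (Suc n)"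
proof -
  have d: "((\<lambda>s. (s - a) ^ Suc n / real (Suc n)) has_real_derivative (s - a) ^ n) (at s within S)" for s S
  proof -
    have 1: "((\<lambda>s. (s - a) ^ Suc n) has_real_derivative real (Suc n) * (s - a) ^ n) (at s within S)"
      by (auto intro!: derivative_eq_intros simp: pow_aux)
    have 2: "real (Suc n) * (s - a) ^ n / real (Suc n) = (s - a) ^ n" by (simp del: of_nat_Suc)
    from DERIV_cdivide[OF 1, of "real (Suc n)"] show ?thesis by (simp only: 2)
  qed
  have "((\<lambda>s. (s - a) ^ n) has_integral ((t - a) ^ Suc n / real (Suc n) - (a - a) ^ Suc n / real (Suc n))) {a..t}"
    by (rule fundamental_theorem_of_calculus[OF assms])
       (use d in \<open>auto simp: has_real_derivative_iff_has_vector_derivative[symmetric]\<close>)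
  then show ?thesis by (simp add: integral_unique)
qed

lemma picard_exists:
  fixes F :: "real \<Rightarrow> 'a::euclidean_space \<Rightarrow> 'a"
  assumes ab: "a \<le> b" and K: "0 \<le> K"
    and lip: "\<And>s x y. s \<in> {a..b} \<Longrightarrow> norm (F s x - F s y) \<le> K * norm (x - y)"
    and intg: "\<And>\<phi>. continuous_on {a..b} \<phi> \<Longrightarrow> (\<lambda>s. F s (\<phi> s)) integrable_on {a..b}"
    and B0: "\<And>s. s \<in> {a..b} \<Longrightarrow> norm (F s z) \<le> B"
  shows "\<exists>\<phi>. continuous_on {a..b} \<phi> \<and> (\<forall>t\<in>{a..b}. \<phi> t = z + integral {a..t} (\<lambda>s. F s (\<phi> s)))"
proof -
  have B: "0 \<le> B" using B0[of a] ab by (meson atLeastAtMost_iff norm_ge_zero order.trans order_refl)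
  define P where "P = (\<lambda>\<phi> t. z + integral {a..t} (\<lambda>s. F s (\<phi> s)))"
  define \<phi> where "\<phi> n = (P ^^ n) (\<lambda>_. z)" for n
  have \<phi>S: "\<phi> (Suc n) = P (\<phi> n)" for n by (simp add: \<phi>_def)
  have intsub: "(\<lambda>s. F s (\<psi> s)) integrable_on {a..t}" if "continuous_on {a..b} \<psi>" "t \<in> {a..b}" for \<psi> t
    by (rule integrable_subinterval_real[OF intg[OF that(1)]]) (use that in auto)
  have cont: "continuous_on {a..b} (\<phi> n)" for n
  proof (induction n)
    case 0 then show ?case by (simp add: \<phi>_def)
  next
    case (Suc n)
    show ?case unfolding \<phi>S P_def
      by (intro continuous_intros indefinite_integral_continuous_1 intg Suc)
  qed
  have bnd: "\<forall>t\<in>{a..b}. norm (\<phi> (Suc n) t - \<phi> n t) \<le> B * K ^ n * (t - a) ^ Suc n / fact (Suc n)" for n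
  proof (induction n)
    case 0
    show ?case
    proof
      fix t assume t: "t \<in> {a..b}"
      have "norm (\<phi> (Suc 0) t - \<phi> 0 t) = norm (integral {a..t} (\<lambda>s. F s z))"
        by (simp add: \<phi>_def P_def)
      also have "\<dots> \<le> integral {a..t} (\<lambda>s. B)"
        by (rule integral_norm_bound_integral)
           (use intsub[of "\<lambda>_. z" t] t B0 in auto)
      also have "\<dots> = B * (t - a)" using t by simp
      finally show "norm (\<phi> (Suc 0) t - \<phi> 0 t) \<le> B * K ^ 0 * (t - a) ^ Suc 0 / fact (Suc 0)"
        by (simp add: mult.commute)
    qed
  next
    case (Suc n)
    show ?case
    proof
      fix t assume t: "t \<in> {a..b}"
      have i1: "(\<lambda>s. F s (\<phi> (Suc n) s)) integrable_on {a..t}" by (rule intsub[OF cont t])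
      have i0: "(\<lambda>s. F s (\<phi> n s)) integrable_on {a..t}" by (rule intsub[OF cont t])
      have deq: "\<phi> (Suc (Suc n)) t - \<phi> (Suc n) t = integral {a..t} (\<lambda>s. F s (\<phi> (Suc n) s) - F s (\<phi> n s))"
      proof -
        have "\<phi> (Suc (Suc n)) t - \<phi> (Suc n) t = P (\<phi> (Suc n)) t - P (\<phi> n) t" by (metis \<phi>S)
        also have "\<dots> = integral {a..t} (\<lambda>s. F s (\<phi> (Suc n) s) - F s (\<phi> n s))"
          by (simp add: P_def integral_diff[OF i1 i0])
        finally show ?thesis .
      qed
      have "norm (\<phi> (Suc (Suc n)) t - \<phi> (Suc n) t)
          \<le> integral {a..t} (\<lambda>s. K * (B * K ^ n * (s - a) ^ Suc n / fact (Suc n)))"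
        unfolding deq
      proof (rule integral_norm_bound_integral, goal_cases)
        case 1 show ?case by (intro integrable_diff i1 i0)
      next
        case 2 show ?case by (intro integrable_continuous_real continuous_intros) auto
      next
        case (3 s)
        have "norm (F s (\<phi> (Suc n) s) - F s (\<phi> n s)) \<le> K * norm (\<phi> (Suc n) s - \<phi> n s)"
          by (rule lip) (use 3 t in auto)
        also have "\<dots> \<le> K * (B * K ^ n * (s - a) ^ Suc n / fact (Suc n))"
          by (rule mult_left_mono[OF Suc[rule_format] K]) (use 3 t in auto)
        finally show ?case .
      qed
      also have "\<dots> = integral {a..t} (\<lambda>s. (K * (B * K ^ n / fact (Suc n))) * (s - a) ^ Suc n)"
        by (rule integral_cong) (simp add: mult_ac)
      also have "\<dots> = K * (B * K ^ n / fact (Suc n)) * integral {a..t} (\<lambda>s. (s - a) ^ Suc n)"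
        by (rule integral_mult_right)
      also have "\<dots> = B * K ^ Suc n * (t - a) ^ Suc (Suc n) / fact (Suc (Suc n))"
      proof -
        have ip: "integral {a..t} (\<lambda>s. (s - a) ^ Suc n) = (t - a) ^ Suc (Suc n) / real (Suc (Suc n))"
          by (rule integral_pow_shift) (use t in auto)
        have fs: "fact (Suc (Suc n)) = real (Suc (Suc n)) * fact (Suc n)" by simp
        show ?thesis unfolding ip fs by (simp add: field_simps del: of_nat_Suc fact_Suc)
      qed
      finally show "norm (\<phi> (Suc (Suc n)) t - \<phi> (Suc n) t) \<le> B * K ^ Suc n * (t - a) ^ Suc (Suc n) / fact (Suc (Suc n))" .
    qed
  qed
  define M where "M n = B * (b - a) * (inverse (fact n) * (K * (b - a)) ^ n)" for n
  have Mb: "norm (\<phi> (Suc n) t - \<phi> n t) \<le> M n" if t: "t \<in> {a..b}" for n t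
  proof -
    have "B * K ^ n * (t - a) ^ Suc n / fact (Suc n) \<le> B * K ^ n * (b - a) ^ Suc n / fact (Suc n)"
      using t B K by (intro divide_right_mono mult_left_mono power_mono) auto
    also have "\<dots> \<le> B * K ^ n * (b - a) ^ Suc n / fact n"
      using B K ab by (intro divide_left_mono mult_nonneg_nonneg fact_mono) (auto simp: fact_mono)
    also have "\<dots> = M n" unfolding M_def power_mult_distrib by (simp add: field_simps)
    finally show ?thesis using bnd[of n] t by (meson order_trans)
  qed
  have sM: "summable M"
    unfolding M_def by (intro summable_mult summable_exp)
  have ul: "uniform_limit {a..b} (\<lambda>n t. \<Sum>i<n. \<phi> (Suc i) t - \<phi> i t) (\<lambda>t. \<Sum>i. \<phi> (Suc i) t - \<phi> i t) sequentially"
    by (rule Weierstrass_m_test[OF _ sM]) (use Mb in auto)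
  define \<psi> where "\<psi> t = z + (\<Sum>i. \<phi> (Suc i) t - \<phi> i t)" for t
  have tel: "(\<lambda>n t. \<Sum>i<n. \<phi> (Suc i) t - \<phi> i t) = (\<lambda>n t. \<phi> n t - z)"
  proof (intro ext)
    fix n t
    have "\<phi> 0 = (\<lambda>_. z)" by (simp add: \<phi>_def)
    then show "(\<Sum>i<n. \<phi> (Suc i) t - \<phi> i t) = \<phi> n t - z"
      using sum_lessThan_telescope[of "\<lambda>i. \<phi> i t" n] by simp
  qed
  have ul2: "uniform_limit {a..b} \<phi> \<psi> sequentially"
  proof -
    have "uniform_limit {a..b} (\<lambda>n t. z + (\<phi> n t - z)) (\<lambda>t. z + (\<Sum>i. \<phi> (Suc i) t - \<phi> i t)) sequentially"
      by (intro uniform_limit_intros) (use ul tel in simp)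
    then show ?thesis unfolding \<psi>_def[abs_def] by simp
  qed
  have c\<psi>: "continuous_on {a..b} \<psi>"
    by (rule uniform_limit_theorem[OF _ ul2]) (auto intro: cont always_eventually)
  have fx: "\<psi> t = z + integral {a..t} (\<lambda>s. F s (\<psi> s))" if t: "t \<in> {a..b}" for t
  proof -
    have l1: "(\<lambda>n. \<phi> (Suc n) t) \<longlonglongrightarrow> \<psi> t"
      using tendsto_uniform_limitI[OF ul2 t] by (rule LIMSEQ_Suc)
    have l2: "(\<lambda>n. \<phi> (Suc n) t) \<longlonglongrightarrow> z + integral {a..t} (\<lambda>s. F s (\<psi> s))"
    proof -
      have "(\<lambda>n. integral {a..t} (\<lambda>s. F s (\<phi> n s))) \<longlonglongrightarrow> integral {a..t} (\<lambda>s. F s (\<psi> s))"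
      proof (rule tendstoI)
        fix e :: real assume e: "e > 0"
        define e' where "e' = e / (2 * ((K + 1) * (b - a + 1)))"
        have e': "e' > 0" using e K ab by (simp add: e'_def)
        have ev: "\<forall>\<^sub>F n in sequentially. \<forall>s\<in>{a..b}. dist (\<phi> n s) (\<psi> s) < e'"
          by (rule uniform_limitD[OF ul2 e'])
        show "\<forall>\<^sub>F n in sequentially. dist (integral {a..t} (\<lambda>s. F s (\<phi> n s))) (integral {a..t} (\<lambda>s. F s (\<psi> s))) < e"
          using ev
        proof eventually_elim
          case (elim n)
          have i1: "(\<lambda>s. F s (\<phi> n s)) integrable_on {a..t}" by (rule intsub[OF cont t])
          have i0: "(\<lambda>s. F s (\<psi> s)) integrable_on {a..t}" by (rule intsub[OF c\<psi> t])
          have "dist (integral {a..t} (\<lambda>s. F s (\<phi> n s))) (integral {a..t} (\<lambda>s. F s (\<psi> s)))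
              = norm (integral {a..t} (\<lambda>s. F s (\<phi> n s) - F s (\<psi> s)))"
            by (simp add: dist_norm integral_diff[OF i1 i0])
          also have "\<dots> \<le> integral {a..t} (\<lambda>s. K * e')"
          proof (rule integral_norm_bound_integral, goal_cases)
            case 1 show ?case by (intro integrable_diff i1 i0)
          next
            case 2 show ?case by (rule integrable_const_ivl)
          next
            case (3 s) then show ?case
              using lip[of s "\<phi> n s" "\<psi> s"] elim[rule_format, of s] t K
              by (auto simp: dist_norm intro!: order_trans[OF _ mult_left_mono[of "norm (\<phi> n s - \<psi> s)" e' K]])
          qed
          also have "\<dots> = K * e' * (t - a)" using t by simp
          also have "\<dots> \<le> (K + 1) * e' * (b - a + 1)"
            using t K e' by (intro mult_mono) auto
          also have "\<dots> < e"
          proof -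
            have X: "(K + 1) * (b - a + 1) > 0" using K ab by simp
            have "(K + 1) * e' * (b - a + 1) = ((K + 1) * (b - a + 1)) * (e / (2 * ((K + 1) * (b - a + 1))))"
              by (simp add: e'_def mult_ac)
            also have "\<dots> = e / 2" using X by (simp add: field_simps)
            finally show ?thesis using e by simp
          qed
          finally show ?case .
        qed
      qed
      then show ?thesis unfolding \<phi>S P_def by (intro tendsto_intros)
    qed
    show ?thesis using LIMSEQ_unique[OF l1 l2] .
  qed
  show ?thesis using c\<psi> fx by blast
qed

lemma integrable_rmult: "f integrable_on S \<Longrightarrow> (\<lambda>x. c * f x :: real) integrable_on S"
  using integrable_cmul[of f S c] by simp

locale odesys =
  fixes f :: "'x::euclidean_space \<Rightarrow> 'm::euclidean_space \<Rightarrow> 'x" and \<rho> K1 :: real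
  assumes fcont: "continuous_on UNIV (\<lambda>(x, w). f x w)"
    and K1: "0 \<le> K1" and rho: "0 \<le> \<rho>"
    and lip: "\<And>x' x'' u' u''. norm u' \<le> \<rho> \<Longrightarrow> norm u'' \<le> \<rho> \<Longrightarrow>
                  norm (f x' u' - f x'' u'') \<le> K1 * (norm (x' - x'') + norm (u' - u''))"
begin

definition ctrl :: "real \<Rightarrow> real \<Rightarrow> (real \<Rightarrow> 'm) \<Rightarrow> bool" where
  "ctrl a b w \<longleftrightarrow> (\<exists>S. finite S \<and> continuous_on ({a..b} - S) w) \<and> (\<forall>s\<in>{a..b}. norm (w s) \<le> \<rho>)"

definition is_sol :: "real \<Rightarrow> real \<Rightarrow> (real \<Rightarrow> 'm) \<Rightarrow> (real \<Rightarrow> 'x) \<Rightarrow> bool" where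
  "is_sol a b w \<phi> \<longleftrightarrow> continuous_on {a..b} \<phi> \<and>
     (\<forall>t\<in>{a..b}. \<phi> t = \<phi> a + integral {a..t} (\<lambda>s. f (\<phi> s) (w s)))"

definition C0 :: real where "C0 = norm (f 0 0) + K1 * \<rho>"

lemma ctrl_sub: assumes "ctrl a b w" "a \<le> c" "d \<le> b" shows "ctrl c d w"
proof -
  obtain S where S: "finite S" "continuous_on ({a..b} - S) w" and wb: "\<forall>s\<in>{a..b}. norm (w s) \<le> \<rho>"
    using assms(1) unfolding ctrl_def by blast
  have "continuous_on ({c..d} - S) w" by (rule continuous_on_subset[OF S(2)]) (use assms in auto)
  then show ?thesis unfolding ctrl_def using S(1) wb assms by auto
qed

lemma f_bound: "norm w \<le> \<rho> \<Longrightarrow> norm (f x w) \<le> C0 + K1 * norm x"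
proof -
  assume w: "norm w \<le> \<rho>"
  have "norm (f x w) \<le> norm (f 0 0) + norm (f x w - f 0 0)" by (rule norm_triangle_sub)
  also have "norm (f x w - f 0 0) \<le> K1 * (norm (x - 0) + norm (w - 0))"
    by (rule lip) (use w rho in auto)
  also have "K1 * (norm (x - 0) + norm (w - 0)) \<le> K1 * (norm x + \<rho>)"
    using w K1 by (intro mult_left_mono) auto
  finally show ?thesis by (simp add: C0_def algebra_simps)
qed

lemma f_lipx: "norm w \<le> \<rho> \<Longrightarrow> norm (f x w - f y w) \<le> K1 * norm (x - y)"
  using lip[of w w x y] by simp

lemma comp_cont:
  assumes "continuous_on S \<phi>" "continuous_on S w"
  shows "continuous_on S (\<lambda>s. f (\<phi> s) (w s))"
  using continuous_on_compose2[OF fcont continuous_on_Pair[OF assms]] by simp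

lemma comp_integrable:
  assumes w: "ctrl a b w" and \<phi>: "continuous_on {a..b} \<phi>" and cd: "{c..d} \<subseteq> {a..b}"
  shows "(\<lambda>s. f (\<phi> s) (w s)) integrable_on {c..d}"
proof -
  obtain S where S: "finite S" "continuous_on ({a..b} - S) w" and wb: "\<forall>s\<in>{a..b}. norm (w s) \<le> \<rho>"
    using w unfolding ctrl_def by blast
  have "bounded (\<phi> ` {a..b})"
    by (intro compact_imp_bounded compact_continuous_image \<phi>) auto
  then obtain R where R: "\<And>s. s \<in> {a..b} \<Longrightarrow> norm (\<phi> s) \<le> R"
    unfolding bounded_iff by blast
  have "(\<lambda>s. f (\<phi> s) (w s)) integrable_on {a..b}"
  proof (rule pc_integrable[OF S(1)])
    show "continuous_on ({a..b} - S) (\<lambda>s. f (\<phi> s) (w s))"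
      by (rule comp_cont[OF continuous_on_subset[OF \<phi>] S(2)]) auto
    fix s assume s: "s \<in> {a..b}"
    show "norm (f (\<phi> s) (w s)) \<le> C0 + K1 * R"
      using f_bound[OF wb[rule_format, OF s], of "\<phi> s"] R[OF s] K1
      by (meson add_left_mono mult_left_mono order_trans)
  qed
  then show ?thesis using cd by (rule integrable_on_subinterval)
qed

lemma sol_diff:
  assumes w1: "ctrl a b w1" and w2: "ctrl a b w2"
    and s1: "is_sol a b w1 \<phi>" and s2: "is_sol a b w2 \<psi>"
    and hint: "h integrable_on {a..b}"
    and hb: "\<And>s. s \<in> {a..b} \<Longrightarrow> norm (w1 s - w2 s) \<le> h s"
    and hD: "integral {a..b} h \<le> \<Delta>"
    and t: "t \<in> {a..b}"
  shows "norm (\<phi> t - \<psi> t) \<le> (norm (\<phi> a - \<psi> a) + K1 * \<Delta>) * exp (K1 * (t - a))"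
proof -
  define d where "d s = norm (\<phi> s - \<psi> s)" for s
  have c\<phi>: "continuous_on {a..b} \<phi>" and c\<psi>: "continuous_on {a..b} \<psi>"
    using s1 s2 unfolding is_sol_def by auto
  have cd: "continuous_on {a..b} d" unfolding d_def by (intro continuous_intros c\<phi> c\<psi>)
  have wb1: "\<forall>s\<in>{a..b}. norm (w1 s) \<le> \<rho>" and wb2: "\<forall>s\<in>{a..b}. norm (w2 s) \<le> \<rho>"
    using w1 w2 unfolding ctrl_def by auto
  have key: "d t \<le> (norm (\<phi> a - \<psi> a) + K1 * \<Delta>) + K1 * integral {a..t} d" if t: "t \<in> {a..b}" for t
  proof -
    have sub: "{a..t} \<subseteq> {a..b}" using t by auto
    have i1: "(\<lambda>s. f (\<phi> s) (w1 s)) integrable_on {a..t}" by (rule comp_integrable[OF w1 c\<phi> sub])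
    have i2: "(\<lambda>s. f (\<psi> s) (w2 s)) integrable_on {a..t}" by (rule comp_integrable[OF w2 c\<psi> sub])
    have id: "d integrable_on {a..t}"
      by (rule integrable_continuous_real[OF continuous_on_subset[OF cd sub]])
    have ih: "h integrable_on {a..t}" by (rule integrable_on_subinterval[OF hint sub])
    have "\<phi> t - \<psi> t = (\<phi> a - \<psi> a) + integral {a..t} (\<lambda>s. f (\<phi> s) (w1 s) - f (\<psi> s) (w2 s))"
      using s1 s2 t unfolding is_sol_def integral_diff[OF i1 i2] by (metis (no_types, lifting) add_diff_add)
    then have "d t \<le> norm (\<phi> a - \<psi> a) + norm (integral {a..t} (\<lambda>s. f (\<phi> s) (w1 s) - f (\<psi> s) (w2 s)))"
      unfolding d_def by (metis norm_triangle_ineq)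
    also have "norm (integral {a..t} (\<lambda>s. f (\<phi> s) (w1 s) - f (\<psi> s) (w2 s))) \<le> integral {a..t} (\<lambda>s. K1 * d s + K1 * h s)"
    proof (rule integral_norm_bound_integral, goal_cases)
      case 1 show ?case by (intro integrable_diff i1 i2)
    next
      case 2 show ?case by (intro integrable_add integrable_rmult id ih)
    next
      case (3 s)
      then have s: "s \<in> {a..b}" using t by auto
      have "norm (f (\<phi> s) (w1 s) - f (\<psi> s) (w2 s)) \<le> K1 * (norm (\<phi> s - \<psi> s) + norm (w1 s - w2 s))"
        by (rule lip) (use wb1 wb2 s in auto)
      also have "\<dots> \<le> K1 * (d s + h s)" using hb[OF s] K1 unfolding d_def
        by (intro mult_left_mono) auto
      finally show ?case by (simp add: algebra_simps)
    qed
    also have "integral {a..t} (\<lambda>s. K1 * d s + K1 * h s) = K1 * integral {a..t} d + K1 * integral {a..t} h"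
      using id ih by (simp add: integral_add integrable_rmult)
    also have "integral {a..t} h \<le> integral {a..b} h"
    proof (rule integral_subset_le[OF sub ih hint], intro ballI)
      fix x assume x: "x \<in> {a..b}"
      show "0 \<le> h x" by (rule order_trans[OF norm_ge_zero hb[OF x]])
    qed
    finally show ?thesis using hD K1
      by (smt (verit, ccfv_SIG) mult_left_mono)
  qed
  show ?thesis
    using gronwall[OF cd K1 key t] unfolding d_def by simp
qed

lemma sol_bound:
  assumes w: "ctrl a b w" and s: "is_sol a b w \<phi>" and t: "t \<in> {a..b}"
  shows "norm (\<phi> t) \<le> (norm (\<phi> a) + C0 * (b - a)) * exp (K1 * (t - a))"
proof -
  define d where "d s = norm (\<phi> s)" for s
  have c\<phi>: "continuous_on {a..b} \<phi>" using s unfolding is_sol_def by auto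
  have cd: "continuous_on {a..b} d" unfolding d_def by (intro continuous_intros c\<phi>)
  have wb: "\<forall>s\<in>{a..b}. norm (w s) \<le> \<rho>" using w unfolding ctrl_def by auto
  have C0: "0 \<le> C0" unfolding C0_def using K1 rho by simp
  have key: "d t \<le> (norm (\<phi> a) + C0 * (b - a)) + K1 * integral {a..t} d" if t: "t \<in> {a..b}" for t
  proof -
    have sub: "{a..t} \<subseteq> {a..b}" using t by auto
    have i1: "(\<lambda>s. f (\<phi> s) (w s)) integrable_on {a..t}" by (rule comp_integrable[OF w c\<phi> sub])
    have id: "d integrable_on {a..t}"
      by (rule integrable_continuous_real[OF continuous_on_subset[OF cd sub]])
    have "d t \<le> norm (\<phi> a) + norm (integral {a..t} (\<lambda>s. f (\<phi> s) (w s)))"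
      using s t unfolding is_sol_def d_def by (metis norm_triangle_ineq)
    also have "norm (integral {a..t} (\<lambda>s. f (\<phi> s) (w s))) \<le> integral {a..t} (\<lambda>s. C0 + K1 * d s)"
    proof (rule integral_norm_bound_integral, goal_cases)
      case 1 show ?case by (rule i1)
    next
      case 2 show ?case by (intro integrable_add integrable_rmult id integrable_const_ivl)
    next
      case (3 s)
      then have s: "s \<in> {a..b}" using t by auto
      show ?case using f_bound[OF wb[rule_format, OF s]] unfolding d_def .
    qed
    also have "integral {a..t} (\<lambda>s. C0 + K1 * d s) = C0 * (t - a) + K1 * integral {a..t} d"
    proof -
      have "integral {a..t} (\<lambda>s. C0 + K1 * d s) = integral {a..t} (\<lambda>s. C0) + integral {a..t} (\<lambda>s. K1 * d s)"
        by (rule integral_add[OF integrable_const_ivl integrable_rmult[OF id]])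
      then show ?thesis using t by (simp add: mult.commute)
    qed
    also have "C0 * (t - a) \<le> C0 * (b - a)" using t C0 by (intro mult_left_mono) auto
    finally show ?thesis by simp
  qed
  show ?thesis
    using gronwall[OF cd K1 key t] unfolding d_def by simp
qed

lemma ode_sol_char:
  assumes w: "ctrl a b w" and ab: "a \<le> b"
  shows "is_sol a b w (ode_sol f w a b z) \<and> ode_sol f w a b z a = z \<and>
         (\<forall>t. t \<notin> {a..b} \<longrightarrow> ode_sol f w a b z t = z)"
proof -
  define Q where "Q \<phi> \<longleftrightarrow> continuous_on {a..b} \<phi> \<and>
      (\<forall>t\<in>{a..b}. \<phi> t = z + integral {a..t} (\<lambda>s. f (\<phi> s) (w s))) \<and>
      (\<forall>t. t \<notin> {a..b} \<longrightarrow> \<phi> t = z)" for \<phi>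
  have wb: "\<forall>s\<in>{a..b}. norm (w s) \<le> \<rho>" using w unfolding ctrl_def by auto
  have Qa: "\<phi> a = z" if "Q \<phi>" for \<phi> using that ab unfolding Q_def by auto
  have Qs: "is_sol a b w \<phi>" if "Q \<phi>" for \<phi> using that Qa[OF that] unfolding Q_def is_sol_def by auto
  obtain \<phi>0 where \<phi>0: "continuous_on {a..b} \<phi>0" "\<forall>t\<in>{a..b}. \<phi>0 t = z + integral {a..t} (\<lambda>s. f (\<phi>0 s) (w s))"
  proof -
    have "\<exists>\<phi>. continuous_on {a..b} \<phi> \<and> (\<forall>t\<in>{a..b}. \<phi> t = z + integral {a..t} (\<lambda>s. f (\<phi> s) (w s)))"
    proof (rule picard_exists[OF ab K1])
      show "norm (f x (w s) - f y (w s)) \<le> K1 * norm (x - y)" if "s \<in> {a..b}" for s x y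
        using f_lipx wb that by blast
      show "(\<lambda>s. f (\<phi> s) (w s)) integrable_on {a..b}" if "continuous_on {a..b} \<phi>" for \<phi>
        by (rule comp_integrable[OF w that]) auto
      show "norm (f z (w s)) \<le> C0 + K1 * norm z" if "s \<in> {a..b}" for s
        using f_bound wb that by blast
    qed
    then show ?thesis using that by blast
  qed
  define \<phi>1 where "\<phi>1 t = (if t \<in> {a..b} then \<phi>0 t else z)" for t
  have Q1: "Q \<phi>1"
  proof -
    have "continuous_on {a..b} \<phi>1"
      using \<phi>0(1) by (rule continuous_on_eq) (simp add: \<phi>1_def)
    moreover have "\<phi>1 t = z + integral {a..t} (\<lambda>s. f (\<phi>1 s) (w s))" if t: "t \<in> {a..b}" for t
    proof -
      have "integral {a..t} (\<lambda>s. f (\<phi>1 s) (w s)) = integral {a..t} (\<lambda>s. f (\<phi>0 s) (w s))"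
        by (rule integral_cong) (use t in \<open>auto simp: \<phi>1_def\<close>)
      then show ?thesis using \<phi>0(2) t by (simp add: \<phi>1_def)
    qed
    ultimately show ?thesis unfolding Q_def \<phi>1_def by auto
  qed
  have uniq: "\<phi> = \<psi>" if "Q \<phi>" "Q \<psi>" for \<phi> \<psi>
  proof
    fix t
    show "\<phi> t = \<psi> t"
    proof (cases "t \<in> {a..b}")
      case True
      have "norm (\<phi> t - \<psi> t) \<le> (norm (\<phi> a - \<psi> a) + K1 * 0) * exp (K1 * (t - a))"
        by (rule sol_diff[OF w w Qs[OF that(1)] Qs[OF that(2)], of "\<lambda>_. 0"]) (use True in auto)
      then show ?thesis using Qa[OF that(1)] Qa[OF that(2)] by simp
    next
      case False
      then show ?thesis using that unfolding Q_def by auto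
    qed
  qed
  have "ode_sol f w a b z = (THE \<phi>. Q \<phi>)" by (simp add: ode_sol_def Q_def)
  also have "(THE \<phi>. Q \<phi>) = \<phi>1" by (rule the_equality[where P=Q, OF Q1]) (rule uniq[OF _ Q1])
  finally have QQ: "Q (ode_sol f w a b z)" using Q1 by simp
  have "\<forall>t. t \<notin> {a..b} \<longrightarrow> ode_sol f w a b z t = z" using QQ unfolding Q_def by blast
  then show ?thesis using Qs[OF QQ] Qa[OF QQ] by blast
qed

lemma is_sol_restrict:
  assumes w: "ctrl a b w" and s: "is_sol a b w \<phi>" and cd: "a \<le> c" "c \<le> d" "d \<le> b"
  shows "is_sol c d w \<phi>"
proof -
  have c\<phi>: "continuous_on {a..b} \<phi>" using s unfolding is_sol_def by auto
  show ?thesis unfolding is_sol_def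
  proof (intro conjI ballI)
    show "continuous_on {c..d} \<phi>" by (rule continuous_on_subset[OF c\<phi>]) (use cd in auto)
    fix t assume t: "t \<in> {c..d}"
    have i: "(\<lambda>s. f (\<phi> s) (w s)) integrable_on {a..t}" by (rule comp_integrable[OF w c\<phi>]) (use t cd in auto)
    have A: "integral {a..c} (\<lambda>s. f (\<phi> s) (w s)) + integral {c..t} (\<lambda>s. f (\<phi> s) (w s)) = integral {a..t} (\<lambda>s. f (\<phi> s) (w s))"
      by (rule Henstock_Kurzweil_Integration.integral_combine[OF _ _ i]) (use t cd in auto)
    have E: "\<forall>t\<in>{a..b}. \<phi> t = \<phi> a + integral {a..t} (\<lambda>s. f (\<phi> s) (w s))"
      using s unfolding is_sol_def by blast
    have B: "\<phi> t = \<phi> a + integral {a..t} (\<lambda>s. f (\<phi> s) (w s))" by (rule E[rule_format]) (use t cd in auto)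
    have C: "\<phi> c = \<phi> a + integral {a..c} (\<lambda>s. f (\<phi> s) (w s))" by (rule E[rule_format]) (use t cd in auto)
    show "\<phi> t = \<phi> c + integral {c..t} (\<lambda>s. f (\<phi> s) (w s))"
      unfolding B C A[symmetric] by (rule add.assoc[symmetric])
  qed
qed

lemma is_sol_spike:
  assumes "negligible N" "\<And>s. s \<in> {a..b} - N \<Longrightarrow> w s = w' s"
  shows "is_sol a b w \<phi> \<longleftrightarrow> is_sol a b w' \<phi>"
proof -
  have "integral {a..t} (\<lambda>s. f (\<phi> s) (w s)) = integral {a..t} (\<lambda>s. f (\<phi> s) (w' s))" if "t \<in> {a..b}" for t
    by (rule integral_spike[OF assms(1)]) (use assms(2) that in force)
  then show ?thesis unfolding is_sol_def by auto
qed

end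

lemma norm_Pair0: "norm (h, 0::'b::real_normed_vector) = norm (h::'a::real_normed_vector)"
  by (simp add: norm_Pair)

lemma rd_iff:
  "(p has_vector_derivative L) (at 0 within S) \<longleftrightarrow>
   (\<forall>e>0. \<exists>d>0. \<forall>y\<in>S. \<bar>y\<bar> < d \<longrightarrow> norm (p y - p 0 - y *\<^sub>R L) \<le> e * \<bar>y\<bar>)"
  unfolding has_vector_derivative_def has_derivative_within_alt
  by (simp add: bounded_linear_scaleR_left)

locale odesys1 = odesys f \<rho> K1 for f :: "'x::euclidean_space \<Rightarrow> 'm::euclidean_space \<Rightarrow> 'x" and \<rho> K1 +
  fixes f' :: "'x \<times> 'm \<Rightarrow> ('x \<times> 'm) \<Rightarrow>\<^sub>L 'x"
  assumes fder: "\<And>z. ((\<lambda>(x, w). f x w) has_derivative blinfun_apply (f' z)) (at z)"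
    and f'cont: "continuous_on UNIV f'"
begin

lemma unif_diff:
  assumes R: "0 \<le> R" and e: "e > 0"
  shows "\<exists>r>0. \<forall>x x' m. norm x \<le> R \<longrightarrow> norm (x' - x) < r \<longrightarrow> norm m \<le> \<rho> \<longrightarrow>
           norm (f x' m - f x m - f' (x, m) (x' - x, 0)) \<le> e * norm (x' - x)"
proof -
  define Kc where "Kc = cball (0::'x) (R + 1) \<times> cball (0::'m) \<rho>"
  have cK: "compact Kc" unfolding Kc_def by (intro compact_Times compact_cball)
  have uc: "uniformly_continuous_on Kc f'"
    by (rule compact_uniformly_continuous[OF continuous_on_subset[OF f'cont] cK]) auto
  obtain r0 where r0: "r0 > 0" "\<And>p q. p \<in> Kc \<Longrightarrow> q \<in> Kc \<Longrightarrow> dist q p < r0 \<Longrightarrow> dist (f' q) (f' p) < e"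
    using uc e unfolding uniformly_continuous_on_def by metis
  define r where "r = min r0 1"
  have r: "r > 0" using r0 by (simp add: r_def)
  show ?thesis
  proof (intro exI[of _ r] conjI allI impI r)
    fix x x' :: 'x and m :: 'm
    assume x: "norm x \<le> R" and xx: "norm (x' - x) < r" and m: "norm m \<le> \<rho>"
    define F where "F = (\<lambda>(x, w). f x w)"
    define S where "S = closed_segment (x, m) (x', m)"
    have SK: "q \<in> Kc \<and> dist q (x, m) < r0" if qS: "q \<in> S" for q
    proof -
      obtain t where t0: "0 \<le> t" "t \<le> 1" and q: "q = (1 - t) *\<^sub>R (x, m) + t *\<^sub>R (x', m)"
        using qS unfolding S_def closed_segment_def by blast
      have t: "t \<in> {0..1}" using t0 by simp
      have q2: "q = (x + t *\<^sub>R (x' - x), m)" unfolding q by (simp add: algebra_simps)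
      have "norm (t *\<^sub>R (x' - x)) \<le> norm (x' - x)" using t by (auto intro: mult_left_le_one_le)
      then have n: "norm (t *\<^sub>R (x' - x)) < r" using xx by linarith
      have "norm (x + t *\<^sub>R (x' - x)) \<le> norm x + norm (t *\<^sub>R (x' - x))" by (rule norm_triangle_ineq)
      then have "norm (x + t *\<^sub>R (x' - x)) \<le> R + 1" using x n r_def by linarith
      moreover have "dist q (x, m) < r0" unfolding q2 dist_norm using n r_def by (simp add: norm_Pair0)
      ultimately show ?thesis unfolding q2 Kc_def using m by auto
    qed
    have xmK: "(x, m) \<in> Kc" unfolding Kc_def using x m by auto
    have "norm (F (x', m) - F (x, m) - blinfun_apply (f' (x, m)) ((x', m) - (x, m))) \<le> norm ((x', m) - (x, m)) * e"
    proof (rule differentiable_bound_linearization[of "(x, m)" "(x', m)" S F "\<lambda>z. blinfun_apply (f' z)"])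
      show "(x, m) + t *\<^sub>R ((x', m) - (x, m)) \<in> S" if "t \<in> {0..1}" for t
        unfolding S_def closed_segment_def using that
        by (intro CollectI exI[of _ t]) (auto simp: algebra_simps)
      show "(F has_derivative blinfun_apply (f' z)) (at z within S)" for z
        unfolding F_def by (rule has_derivative_at_withinI[OF fder])
      show "onorm (blinfun_apply (f' z) - blinfun_apply (f' (x, m))) \<le> e" if "z \<in> S" for z
      proof -
        have "blinfun_apply (f' z) - blinfun_apply (f' (x, m)) = blinfun_apply (f' z - f' (x, m))"
          by (rule ext) (simp add: minus_blinfun.rep_eq)
        then have "onorm (blinfun_apply (f' z) - blinfun_apply (f' (x, m))) = dist (f' z) (f' (x, m))"
          by (simp add: dist_norm norm_blinfun.rep_eq)
        also have "\<dots> < e" using r0(2)[OF xmK, of z] SK[OF that] by auto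
        finally show ?thesis by simp
      qed
      show "(x, m) \<in> S" unfolding S_def by simp
    qed
    then show "norm (f x' m - f x m - f' (x, m) (x' - x, 0)) \<le> e * norm (x' - x)"
      by (simp add: F_def norm_Pair0 mult.commute)
  qed
qed

end

context odesys1 begin

lemma flow_deriv:
  assumes ab: "a \<le> b" and e0: "0 < e0"
    and w: "ctrl a b u"
    and sol: "\<And>\<epsilon>. \<epsilon> \<in> {0..e0} \<Longrightarrow> is_sol a b u (\<phi> \<epsilon>)"
    and Lb: "\<And>\<epsilon> t. \<epsilon> \<in> {0..e0} \<Longrightarrow> t \<in> {a..b} \<Longrightarrow> norm (\<phi> \<epsilon> t - \<phi> 0 t) \<le> C * \<epsilon>"
    and d0: "((\<lambda>\<epsilon>. \<phi> \<epsilon> a) has_vector_derivative L) (at 0 within {0..e0})"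
  shows "\<exists>\<Psi>. \<forall>t\<in>{a..b}. ((\<lambda>\<epsilon>. \<phi> \<epsilon> t) has_vector_derivative \<Psi> t) (at 0 within {0..e0})"
proof -
  obtain S where S: "finite S" "continuous_on ({a..b} - S) u" and ub: "\<And>s. s \<in> {a..b} \<Longrightarrow> norm (u s) \<le> \<rho>"
    using w unfolding ctrl_def by blast
  have sol0: "is_sol a b u (\<phi> 0)" using sol[of 0] e0 by simp
  have c0: "continuous_on {a..b} (\<phi> 0)" using sol0 unfolding is_sol_def by blast
  have C: "0 \<le> C"
  proof -
    have "0 \<le> C * e0" using Lb[of e0 a] e0 ab by (meson atLeastAtMost_iff less_eq_real_def norm_ge_zero order_trans order_refl)
    then show ?thesis using e0 by (simp add: zero_le_mult_iff)
  qed
  have "bounded (\<phi> 0 ` {a..b})"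
    by (intro compact_imp_bounded compact_continuous_image c0) auto
  then obtain R0 where R0: "\<And>s. s \<in> {a..b} \<Longrightarrow> norm (\<phi> 0 s) \<le> R0"
    unfolding bounded_iff by blast
  define R where "R = max R0 0"
  have R: "0 \<le> R" "\<And>s. s \<in> {a..b} \<Longrightarrow> norm (\<phi> 0 s) \<le> R" using R0 by (auto simp: R_def intro: le_max_iff_disj[THEN iffD2])
  have "bounded (f' ` (cball 0 R \<times> cball 0 \<rho>))"
    by (intro compact_imp_bounded compact_continuous_image continuous_on_subset[OF f'cont] compact_Times compact_cball) auto
  then obtain BA0 where BA0: "\<And>p. p \<in> cball 0 R \<times> cball 0 \<rho> \<Longrightarrow> norm (f' p) \<le> BA0"
    unfolding bounded_iff by blast
  define BA where "BA = max BA0 0"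
  have BA: "0 \<le> BA" "\<And>p. p \<in> cball 0 R \<times> cball 0 \<rho> \<Longrightarrow> norm (f' p) \<le> BA"
    using BA0 by (auto simp: BA_def intro: le_max_iff_disj[THEN iffD2])
  define A where "A s h = blinfun_apply (f' (\<phi> 0 s, u s)) (h, 0)" for s h
  have Ab: "norm (A s h) \<le> BA * norm h" if s: "s \<in> {a..b}" for s h
  proof -
    have "norm (A s h) \<le> norm (f' (\<phi> 0 s, u s)) * norm (h, 0::'m)" unfolding A_def by (rule norm_blinfun)
    also have "\<dots> \<le> BA * norm h"
      using BA(2)[of "(\<phi> 0 s, u s)"] R(2)[OF s] ub[OF s] by (auto simp: norm_Pair0 intro: mult_right_mono)
    finally show ?thesis .
  qed
  have Adiff: "A s x - A s y = A s (x - y)" for s x y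
    unfolding A_def by (simp add: blinfun.diff_right[symmetric])
  have Ascale: "A s (c *\<^sub>R x) = c *\<^sub>R A s x" for s c x
    unfolding A_def by (simp add: blinfun.scaleR_right[symmetric])
  have Aint: "(\<lambda>s. A s (\<psi> s)) integrable_on {c..d}" if "continuous_on {a..b} \<psi>" "{c..d} \<subseteq> {a..b}" for \<psi> c d
  proof -
    have "bounded (\<psi> ` {a..b})"
      by (intro compact_imp_bounded compact_continuous_image that) auto
    then obtain R\<psi> where R\<psi>: "\<And>s. s \<in> {a..b} \<Longrightarrow> norm (\<psi> s) \<le> R\<psi>"
      unfolding bounded_iff by blast
    have "(\<lambda>s. A s (\<psi> s)) integrable_on {a..b}"
    proof (rule pc_integrable[OF S(1)])
      have "continuous_on ({a..b} - S) (\<lambda>s. f' (\<phi> 0 s, u s))"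
        by (rule continuous_on_compose2[OF f'cont]) (auto intro!: continuous_intros continuous_on_subset[OF c0] S(2))
      then show "continuous_on ({a..b} - S) (\<lambda>s. A s (\<psi> s))"
        unfolding A_def by (auto intro!: continuous_intros continuous_on_subset[OF that(1)])
      fix s assume s: "s \<in> {a..b}"
      show "norm (A s (\<psi> s)) \<le> BA * R\<psi>"
        using Ab[OF s, of "\<psi> s"] R\<psi>[OF s] BA(1) by (meson mult_left_mono order_trans)
    qed
    then show ?thesis using that(2) by (rule integrable_on_subinterval)
  qed
  obtain \<Psi> where c\<Psi>: "continuous_on {a..b} \<Psi>" and \<Psi>eq: "\<forall>t\<in>{a..b}. \<Psi> t = L + integral {a..t} (\<lambda>s. A s (\<Psi> s))"
  proof -
    have "\<exists>\<Psi>. continuous_on {a..b} \<Psi> \<and> (\<forall>t\<in>{a..b}. \<Psi> t = L + integral {a..t} (\<lambda>s. A s (\<Psi> s)))"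
    proof (rule picard_exists[OF ab BA(1)])
      show "norm (A s x - A s y) \<le> BA * norm (x - y)" if "s \<in> {a..b}" for s x y
        unfolding Adiff using Ab[OF that] .
      show "(\<lambda>s. A s (\<psi> s)) integrable_on {a..b}" if "continuous_on {a..b} \<psi>" for \<psi>
        by (rule Aint[OF that]) auto
      show "norm (A s L) \<le> BA * norm L" if "s \<in> {a..b}" for s
        using Ab[OF that] .
    qed
    then show ?thesis using that by blast
  qed
  have \<Psi>a: "\<Psi> a = L" using \<Psi>eq ab by auto
  define M where "M = (1 + C * (b - a)) * exp (BA * (b - a))"
  have M: "M \<ge> 1"
  proof -
    have "1 \<le> 1 + C * (b - a)" using C ab by simp
    moreover have "1 \<le> exp (BA * (b - a))" using BA(1) ab by simp
    ultimately show ?thesis unfolding M_def by (metis mult_mono' mult_1 zero_le_one)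
  qed
  have main: "\<exists>d>0. \<forall>y\<in>{0..e0}. \<bar>y\<bar> < d \<longrightarrow> norm (\<phi> y t - \<phi> 0 t - y *\<^sub>R \<Psi> t) \<le> \<delta> * \<bar>y\<bar>"
    if t: "t \<in> {a..b}" and \<delta>: "\<delta> > 0" for t \<delta>
  proof -
    define \<eta> where "\<eta> = \<delta> / M"
    have \<eta>: "\<eta> > 0" using \<delta> M by (simp add: \<eta>_def)
    obtain r where r: "r > 0" and ud: "\<And>x x' m. norm x \<le> R \<Longrightarrow> norm (x' - x) < r \<Longrightarrow> norm m \<le> \<rho> \<Longrightarrow>
           norm (f x' m - f x m - f' (x, m) (x' - x, 0)) \<le> \<eta> * norm (x' - x)"
      using unif_diff[OF R(1) \<eta>] by blast
    obtain d1 where d1: "d1 > 0" and dd1: "\<And>y. y \<in> {0..e0} \<Longrightarrow> \<bar>y\<bar> < d1 \<Longrightarrow> norm (\<phi> y a - \<phi> 0 a - y *\<^sub>R L) \<le> \<eta> * \<bar>y\<bar>"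
      using d0[unfolded rd_iff] \<eta> by blast
    define d where "d = min d1 (r / (C + 1))"
    have d: "d > 0" using d1 r C by (simp add: d_def)
    show ?thesis
    proof (intro exI[of _ d] conjI d ballI impI)
      fix \<epsilon> assume \<epsilon>: "\<epsilon> \<in> {0..e0}" and \<epsilon>d: "\<bar>\<epsilon>\<bar> < d"
      have \<epsilon>0: "0 \<le> \<epsilon>" using \<epsilon> by simp
      have s\<epsilon>: "is_sol a b u (\<phi> \<epsilon>)" by (rule sol[OF \<epsilon>])
      have c\<epsilon>: "continuous_on {a..b} (\<phi> \<epsilon>)" using s\<epsilon> unfolding is_sol_def by blast
      define e where "e s = \<phi> \<epsilon> s - \<phi> 0 s - \<epsilon> *\<^sub>R \<Psi> s" for s
      define G where "G s = f (\<phi> \<epsilon> s) (u s) - f (\<phi> 0 s) (u s) - \<epsilon> *\<^sub>R A s (\<Psi> s)" for s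
      have ce: "continuous_on {a..b} e" unfolding e_def by (intro continuous_intros c\<epsilon> c0 c\<Psi>)
      have Cr: "C * \<epsilon> < r"
      proof -
        have "C * \<epsilon> \<le> (C + 1) * \<epsilon>" using \<epsilon>0 by (simp add: mult_right_mono)
        also have "(C + 1) * \<epsilon> < (C + 1) * (r / (C + 1))"
          using \<epsilon>d \<epsilon>0 C unfolding d_def by (intro mult_strict_left_mono) auto
        also have "\<dots> = r" using C by simp
        finally show ?thesis .
      qed
      have Gb: "norm (G s) \<le> \<eta> * C * \<epsilon> + BA * norm (e s)" if s: "s \<in> {a..b}" for s
      proof -
        have "G s = (f (\<phi> \<epsilon> s) (u s) - f (\<phi> 0 s) (u s) - A s (\<phi> \<epsilon> s - \<phi> 0 s)) + A s (e s)"
          unfolding G_def e_def Adiff[symmetric] Ascale[symmetric] by (simp add: algebra_simps)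
        then have "norm (G s) \<le> norm (f (\<phi> \<epsilon> s) (u s) - f (\<phi> 0 s) (u s) - A s (\<phi> \<epsilon> s - \<phi> 0 s)) + norm (A s (e s))"
          by (metis norm_triangle_ineq)
        also have "norm (f (\<phi> \<epsilon> s) (u s) - f (\<phi> 0 s) (u s) - A s (\<phi> \<epsilon> s - \<phi> 0 s)) \<le> \<eta> * norm (\<phi> \<epsilon> s - \<phi> 0 s)"
          unfolding A_def
          by (rule ud[OF R(2)[OF s]]) (use Lb[OF \<epsilon> s] Cr ub[OF s] in auto)
        also have "\<eta> * norm (\<phi> \<epsilon> s - \<phi> 0 s) \<le> \<eta> * (C * \<epsilon>)"
          using Lb[OF \<epsilon> s] \<eta> by (intro mult_left_mono) auto
        also have "norm (A s (e s)) \<le> BA * norm (e s)" by (rule Ab[OF s])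
        finally show ?thesis by (simp add: mult.assoc)
      qed
      have key: "norm (e t') \<le> (\<eta> * \<epsilon> + \<eta> * C * \<epsilon> * (b - a)) + BA * integral {a..t'} (\<lambda>s. norm (e s))"
        if t': "t' \<in> {a..b}" for t'
      proof -
        have sub: "{a..t'} \<subseteq> {a..b}" using t' by auto
        have i1: "(\<lambda>s. f (\<phi> \<epsilon> s) (u s)) integrable_on {a..t'}" by (rule comp_integrable[OF w c\<epsilon> sub])
        have i0: "(\<lambda>s. f (\<phi> 0 s) (u s)) integrable_on {a..t'}" by (rule comp_integrable[OF w c0 sub])
        have iA: "(\<lambda>s. A s (\<Psi> s)) integrable_on {a..t'}" by (rule Aint[OF c\<Psi> sub])
        have iG: "G integrable_on {a..t'}" unfolding G_def by (intro integrable_diff i1 i0 integrable_cmul iA)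
        have ine: "(\<lambda>s. norm (e s)) integrable_on {a..t'}"
          by (rule integrable_continuous_real) (intro continuous_intros continuous_on_subset[OF ce sub])
        have E1: "\<phi> \<epsilon> t' = \<phi> \<epsilon> a + integral {a..t'} (\<lambda>s. f (\<phi> \<epsilon> s) (u s))"
          using s\<epsilon> t' unfolding is_sol_def by blast
        have E0: "\<phi> 0 t' = \<phi> 0 a + integral {a..t'} (\<lambda>s. f (\<phi> 0 s) (u s))"
          using sol0 t' unfolding is_sol_def by blast
        have EP: "\<Psi> t' = L + integral {a..t'} (\<lambda>s. A s (\<Psi> s))" using \<Psi>eq t' by blast
        have eq: "e t' = e a + integral {a..t'} G"
          unfolding G_def integral_diff[OF integrable_diff[OF i1 i0] integrable_cmul[OF iA]]
            integral_diff[OF i1 i0] integral_cmul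
          unfolding e_def E1 E0 EP \<Psi>a by (simp add: algebra_simps)
        have "norm (e t') \<le> norm (e a) + norm (integral {a..t'} G)"
          unfolding eq by (rule norm_triangle_ineq)
        also have "norm (e a) \<le> \<eta> * \<epsilon>"
          using dd1[OF \<epsilon>] \<epsilon>d \<epsilon>0 unfolding e_def \<Psi>a d_def by auto
        also have "norm (integral {a..t'} G) \<le> integral {a..t'} (\<lambda>s. \<eta> * C * \<epsilon> + BA * norm (e s))"
          by (rule integral_norm_bound_integral[OF iG integrable_add[OF integrable_const_ivl integrable_rmult[OF ine]]])
             (use Gb sub in auto)
        also have "integral {a..t'} (\<lambda>s. \<eta> * C * \<epsilon> + BA * norm (e s)) = \<eta> * C * \<epsilon> * (t' - a) + BA * integral {a..t'} (\<lambda>s. norm (e s))"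
          using integral_add[OF integrable_const_ivl integrable_rmult[OF ine], of "\<eta> * C * \<epsilon>" BA] t'
          by (simp add: mult.commute)
        also have "\<eta> * C * \<epsilon> * (t' - a) \<le> \<eta> * C * \<epsilon> * (b - a)"
          using t' \<eta> C \<epsilon>0 by (intro mult_left_mono) auto
        finally show ?thesis by simp
      qed
      have "norm (e t) \<le> (\<eta> * \<epsilon> + \<eta> * C * \<epsilon> * (b - a)) * exp (BA * (t - a))"
        by (rule gronwall[where d="\<lambda>s. norm (e s)", OF _ BA(1) key t]) (intro continuous_intros ce)
      also have "\<dots> \<le> (\<eta> * \<epsilon> + \<eta> * C * \<epsilon> * (b - a)) * exp (BA * (b - a))"
        using t BA(1) \<eta> \<epsilon>0 C ab by (intro mult_left_mono) (auto intro: mult_left_mono)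
      also have "\<dots> = \<eta> * \<epsilon> * M" unfolding M_def by (simp add: algebra_simps)
      also have "\<dots> = \<delta> * \<bar>\<epsilon>\<bar>" using M \<epsilon>0 by (simp add: \<eta>_def)
      finally show "norm (\<phi> \<epsilon> t - \<phi> 0 t - \<epsilon> *\<^sub>R \<Psi> t) \<le> \<delta> * \<bar>\<epsilon>\<bar>" unfolding e_def .
    qed
  qed
  show ?thesis
    by (intro exI[of _ \<Psi>] ballI, unfold rd_iff) (use main in blast)
qed

end

lemma needle_0: "needle u \<tau> v 0 = u"
  by (rule ext) (simp add: needle_def)

lemma needle_cont:
  assumes u: "continuous_on T u" and n1: "\<tau> - \<epsilon> \<notin> T" and n2: "\<tau> \<notin> T"
  shows "continuous_on T (needle u \<tau> v \<epsilon>)"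
  unfolding continuous_on_eq_continuous_within
proof
  fix x assume x: "x \<in> T"
  have ux: "continuous (at x within T) u" using u x by (simp add: continuous_on_eq_continuous_within)
  consider "x \<in> {\<tau> - \<epsilon><..<\<tau>}" | "x < \<tau> - \<epsilon>" | "x > \<tau>" | "x \<in> {\<tau> - \<epsilon><..<\<tau>} \<and> False"
    using x n1 n2 by (cases "x < \<tau> - \<epsilon>"; cases "x > \<tau>") (auto simp: not_less less_le)
  then show "continuous (at x within T) (needle u \<tau> v \<epsilon>)"
  proof cases
    case 1
    show ?thesis
      by (rule continuous_transform_within[of x T "\<lambda>_. v" "min (x - (\<tau> - \<epsilon>)) (\<tau> - x)"])
         (use 1 x in \<open>auto simp: needle_def dist_real_def\<close>)
  next
    case 2
    show ?thesis
      by (rule continuous_transform_within[OF ux, of "\<tau> - \<epsilon> - x"])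
         (use 2 x in \<open>auto simp: needle_def dist_real_def\<close>)
  next
    case 3
    show ?thesis
      by (rule continuous_transform_within[OF ux, of "x - \<tau>"])
         (use 3 x in \<open>auto simp: needle_def dist_real_def\<close>)
  qed auto
qed

context odesys begin

lemma needle_ctrl:
  assumes u: "ctrl a b u" and v: "norm v \<le> \<rho>"
  shows "ctrl a b (needle u \<tau> v \<epsilon>)"
proof -
  obtain S where S: "finite S" "continuous_on ({a..b} - S) u" and ub: "\<forall>s\<in>{a..b}. norm (u s) \<le> \<rho>"
    using u unfolding ctrl_def by blast
  have "continuous_on ({a..b} - (S \<union> {\<tau> - \<epsilon>, \<tau>})) (needle u \<tau> v \<epsilon>)"
    by (rule needle_cont[OF continuous_on_subset[OF S(2)]]) auto
  moreover have "finite (S \<union> {\<tau> - \<epsilon>, \<tau>})" using S(1) by simp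
  moreover have "\<forall>s\<in>{a..b}. norm (needle u \<tau> v \<epsilon> s) \<le> \<rho>" using ub v by (simp add: needle_def)
  ultimately show ?thesis unfolding ctrl_def by blast
qed

lemma needle_diff:
  assumes u: "ctrl a b u" and v: "norm v \<le> \<rho>" and \<epsilon>: "0 \<le> \<epsilon>" "a \<le> \<tau> - \<epsilon>" "\<tau> \<le> b"
    and s1: "is_sol a b (needle u \<tau> v \<epsilon>) \<phi>" and s2: "is_sol a b u \<psi>" and st: "\<phi> a = \<psi> a"
    and t: "t \<in> {a..b}"
  shows "norm (\<phi> t - \<psi> t) \<le> K1 * (2 * \<rho> * \<epsilon>) * exp (K1 * (t - a))"
proof -
  define h where "h s = (if s \<in> {\<tau> - \<epsilon>..\<tau>} then 2 * \<rho> else 0)" for s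
  have ub: "\<forall>s\<in>{a..b}. norm (u s) \<le> \<rho>" using u unfolding ctrl_def by blast
  have eqI: "{\<tau> - \<epsilon>..\<tau>} \<inter> {a..b} = {\<tau> - \<epsilon>..\<tau>}" using \<epsilon> by auto
  have hi: "h integrable_on {a..b}"
    unfolding h_def integrable_restrict_Int eqI by (rule integrable_const_ivl)
  have hI: "integral {a..b} h = 2 * \<rho> * \<epsilon>"
    unfolding h_def integral_restrict_Int eqI using \<epsilon> by simp
  have hb: "norm (needle u \<tau> v \<epsilon> s - u s) \<le> h s" if s: "s \<in> {a..b}" for s
  proof (cases "s \<in> {\<tau> - \<epsilon><..\<tau>}")
    case True
    have "norm (v - u s) \<le> norm v + norm (u s)" by (rule norm_triangle_ineq4)
    also have "\<dots> \<le> 2 * \<rho>" using v ub[rule_format, OF s] by linarith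
    finally show ?thesis using True by (simp add: needle_def h_def)
  next
    case False
    then show ?thesis using rho by (simp add: needle_def h_def)
  qed
  show ?thesis
    using sol_diff[OF needle_ctrl[OF u v] u s1 s2 hi hb _ t, of "2 * \<rho> * \<epsilon>"] hI st by simp
qed

end

lemma half_aux: "(X::real) \<noteq> 0 \<Longrightarrow> X * (\<delta> / (2 * X)) = \<delta> / 2"
  by (simp add: field_simps)

context odesys begin

lemma needle_deriv:
  assumes u: "ctrl a b u" and v: "norm v \<le> \<rho>" and a\<tau>: "a < \<tau>" "\<tau> \<le> b"
    and ul: "continuous (at_left \<tau>) u"
    and sol: "\<And>\<epsilon>. \<epsilon> \<in> {0..\<tau> - a} \<Longrightarrow> is_sol a b (needle u \<tau> v \<epsilon>) (\<phi> \<epsilon>)"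
    and st: "\<And>\<epsilon>. \<epsilon> \<in> {0..\<tau> - a} \<Longrightarrow> \<phi> \<epsilon> a = \<phi> 0 a"
  shows "((\<lambda>\<epsilon>. \<phi> \<epsilon> \<tau>) has_vector_derivative (f (\<phi> 0 \<tau>) v - f (\<phi> 0 \<tau>) (u \<tau>))) (at 0 within {0..\<tau> - a})"
  unfolding rd_iff
proof (intro allI impI)
  fix \<delta> :: real assume \<delta>: "\<delta> > 0"
  define c where "c = f (\<phi> 0 \<tau>) v - f (\<phi> 0 \<tau>) (u \<tau>)"
  have ub: "\<And>s. s \<in> {a..b} \<Longrightarrow> norm (u s) \<le> \<rho>" using u unfolding ctrl_def by blast
  have sol0: "is_sol a b u (\<phi> 0)" using sol[of 0] a\<tau> by (simp add: needle_0)
  have c0: "continuous_on {a..b} (\<phi> 0)" using sol0 unfolding is_sol_def by blast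
  define Dn where "Dn = K1 * (2 * \<rho>) * exp (K1 * (b - a))"
  have Dn0: "0 \<le> Dn" unfolding Dn_def using K1 rho by simp
  have Dnb: "norm (\<phi> \<epsilon> s - \<phi> 0 s) \<le> Dn * \<epsilon>" if \<epsilon>: "\<epsilon> \<in> {0..\<tau> - a}" and s: "s \<in> {a..b}" for \<epsilon> s
  proof -
    have "norm (\<phi> \<epsilon> s - \<phi> 0 s) \<le> K1 * (2 * \<rho> * \<epsilon>) * exp (K1 * (s - a))"
      by (rule needle_diff[OF u v _ _ a\<tau>(2) sol[OF \<epsilon>] sol0 st[OF \<epsilon>] s]) (use \<epsilon> in auto)
    also have "\<dots> \<le> K1 * (2 * \<rho> * \<epsilon>) * exp (K1 * (b - a))"
      using K1 rho \<epsilon> s by (intro mult_left_mono) (auto intro: mult_left_mono)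
    finally show ?thesis by (simp add: Dn_def mult_ac)
  qed
  define \<eta> where "\<eta> = \<delta> / (6 * (K1 + 1))"
  have \<eta>: "\<eta> > 0" using \<delta> K1 by (simp add: \<eta>_def)
  obtain d2 where d2: "d2 > 0" "\<And>s. s \<in> {a..b} \<Longrightarrow> dist s \<tau> < d2 \<Longrightarrow> dist (\<phi> 0 s) (\<phi> 0 \<tau>) < \<eta>"
    using c0 \<eta> a\<tau> unfolding continuous_on_iff by (metis atLeastAtMost_iff less_imp_le order_refl)
  have "(u \<longlongrightarrow> u \<tau>) (at_left \<tau>)" using ul by (simp add: continuous_within)
  then have "\<forall>\<^sub>F s in at_left \<tau>. dist (u s) (u \<tau>) < \<eta>" using \<eta> by (rule tendstoD)
  then obtain b3 where b3: "b3 < \<tau>" "\<And>s. b3 < s \<Longrightarrow> s < \<tau> \<Longrightarrow> dist (u s) (u \<tau>) < \<eta>"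
    unfolding eventually_at_left_field by blast
  define d where "d = min (min d2 (\<tau> - b3)) (\<delta> / (2 * (K1 * Dn + 1)))"
  have kd0: "0 \<le> K1 * Dn" using K1 Dn0 by simp
  have kd1: "0 < K1 * Dn + 1" using kd0 by linarith
  have kd: "0 < 2 * (K1 * Dn + 1)" using kd1 by (rule mult_pos_pos[rotated]) simp
  have d: "d > 0" using d2 b3 \<delta> kd by (simp add: d_def)
  show "\<exists>d>0. \<forall>y\<in>{0..\<tau> - a}. \<bar>y\<bar> < d \<longrightarrow> norm (\<phi> y \<tau> - \<phi> 0 \<tau> - y *\<^sub>R (f (\<phi> 0 \<tau>) v - f (\<phi> 0 \<tau>) (u \<tau>))) \<le> \<delta> * \<bar>y\<bar>"
  proof (intro exI[of _ d] conjI d ballI impI, fold c_def)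
    fix \<epsilon> assume \<epsilon>: "\<epsilon> \<in> {0..\<tau> - a}" and \<epsilon>d: "\<bar>\<epsilon>\<bar> < d"
    show "norm (\<phi> \<epsilon> \<tau> - \<phi> 0 \<tau> - \<epsilon> *\<^sub>R c) \<le> \<delta> * \<bar>\<epsilon>\<bar>"
    proof (cases "\<epsilon> = 0")
      case True then show ?thesis by simp
    next
      case False
      then have \<epsilon>0: "0 < \<epsilon>" using \<epsilon> by simp
      define m where "m = \<tau> - \<epsilon>"
      have am: "a \<le> m" "m < \<tau>" using \<epsilon> \<epsilon>0 by (auto simp: m_def)
      have nc: "ctrl a b (needle u \<tau> v \<epsilon>)" by (rule needle_ctrl[OF u v])
      have s\<epsilon>: "is_sol a b (needle u \<tau> v \<epsilon>) (\<phi> \<epsilon>)" by (rule sol[OF \<epsilon>])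
      have c\<epsilon>: "continuous_on {a..b} (\<phi> \<epsilon>)" using s\<epsilon> unfolding is_sol_def by blast
      have eqm: "\<phi> \<epsilon> m = \<phi> 0 m"
      proof -
        have "norm (\<phi> \<epsilon> m - \<phi> 0 m) \<le> (norm (\<phi> \<epsilon> a - \<phi> 0 a) + K1 * 0) * exp (K1 * (m - a))"
        proof (rule sol_diff[of a m "needle u \<tau> v \<epsilon>" u _ _ "\<lambda>_. 0"])
          show "ctrl a m (needle u \<tau> v \<epsilon>)" by (rule ctrl_sub[OF nc]) (use am a\<tau> in auto)
          show "ctrl a m u" by (rule ctrl_sub[OF u]) (use am a\<tau> in auto)
          show "is_sol a m (needle u \<tau> v \<epsilon>) (\<phi> \<epsilon>)" by (rule is_sol_restrict[OF nc s\<epsilon>]) (use am a\<tau> in auto)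
          show "is_sol a m u (\<phi> 0)" by (rule is_sol_restrict[OF u sol0]) (use am a\<tau> in auto)
          show "norm (needle u \<tau> v \<epsilon> s - u s) \<le> 0" if "s \<in> {a..m}" for s
            using that by (simp add: needle_def m_def)
        qed (use am in auto)
        then show ?thesis using st[OF \<epsilon>] by simp
      qed
      have s\<epsilon>2: "is_sol m \<tau> (needle u \<tau> v \<epsilon>) (\<phi> \<epsilon>)" by (rule is_sol_restrict[OF nc s\<epsilon>]) (use am a\<tau> in auto)
      have s02: "is_sol m \<tau> u (\<phi> 0)" by (rule is_sol_restrict[OF u sol0]) (use am a\<tau> in auto)
      have sub: "{m..\<tau>} \<subseteq> {a..b}" using am a\<tau> by auto
      have i1: "(\<lambda>s. f (\<phi> \<epsilon> s) (needle u \<tau> v \<epsilon> s)) integrable_on {m..\<tau>}" by (rule comp_integrable[OF nc c\<epsilon> sub])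
      have i0: "(\<lambda>s. f (\<phi> 0 s) (u s)) integrable_on {m..\<tau>}" by (rule comp_integrable[OF u c0 sub])
      define G where "G s = f (\<phi> \<epsilon> s) (needle u \<tau> v \<epsilon> s) - f (\<phi> 0 s) (u s) - c" for s
      define G' where "G' s = (if s = m then 0 else G s)" for s
      have iG: "G integrable_on {m..\<tau>}" unfolding G_def by (intro integrable_diff i1 i0 integrable_const_ivl)
      have E1: "\<phi> \<epsilon> \<tau> = \<phi> \<epsilon> m + integral {m..\<tau>} (\<lambda>s. f (\<phi> \<epsilon> s) (needle u \<tau> v \<epsilon> s))"
        using s\<epsilon>2 am unfolding is_sol_def by (meson atLeastAtMost_iff order_refl less_imp_le)
      have E0: "\<phi> 0 \<tau> = \<phi> 0 m + integral {m..\<tau>} (\<lambda>s. f (\<phi> 0 s) (u s))"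
        using s02 am unfolding is_sol_def by (meson atLeastAtMost_iff order_refl less_imp_le)
      have "integral {m..\<tau>} G = integral {m..\<tau>} (\<lambda>s. f (\<phi> \<epsilon> s) (needle u \<tau> v \<epsilon> s)) - integral {m..\<tau>} (\<lambda>s. f (\<phi> 0 s) (u s)) - \<epsilon> *\<^sub>R c"
        unfolding G_def integral_diff[OF integrable_diff[OF i1 i0] integrable_const_ivl] integral_diff[OF i1 i0]
        using am by (simp add: m_def)
      moreover have "integral {m..\<tau>} G' = integral {m..\<tau>} G"
        by (rule integral_spike[of "{m}"]) (auto simp: G'_def)
      ultimately have Deq: "\<phi> \<epsilon> \<tau> - \<phi> 0 \<tau> - \<epsilon> *\<^sub>R c = integral {m..\<tau>} G'"
        unfolding E1 E0 eqm by simp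
      have G'b: "norm (G' s) \<le> \<delta>" if s: "s \<in> {m..\<tau>}" for s
      proof (cases "s = m")
        case True then show ?thesis using \<delta> by (simp add: G'_def)
      next
        case False
        then have s': "m < s" "s \<le> \<tau>" using s by auto
        have sab: "s \<in> {a..b}" using s sub by auto
        have nd: "needle u \<tau> v \<epsilon> s = v" using s' by (simp add: needle_def m_def)
        have p1: "norm (\<phi> 0 s - \<phi> 0 \<tau>) < \<eta>"
        proof -
          have "dist s \<tau> < d2" using s' \<epsilon>d unfolding d_def m_def dist_real_def by auto
          then show ?thesis using d2(2)[OF sab] by (simp add: dist_norm)
        qed
        have p2: "norm (u s - u \<tau>) \<le> \<eta>"
        proof (cases "s = \<tau>")
          case True then show ?thesis using \<eta> by simp
        next
          case False
          then have "s < \<tau>" using s' by simp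
          moreover have "b3 < s" using s' \<epsilon>d unfolding d_def m_def by auto
          ultimately show ?thesis using b3(2)[of s] by (simp add: dist_norm)
        qed
        have p3: "norm (\<phi> \<epsilon> s - \<phi> 0 s) \<le> Dn * \<epsilon>" by (rule Dnb[OF \<epsilon> sab])
        have "norm (G s) \<le> norm (f (\<phi> \<epsilon> s) v - f (\<phi> 0 \<tau>) v) + norm (f (\<phi> 0 s) (u s) - f (\<phi> 0 \<tau>) (u \<tau>))"
          unfolding G_def c_def nd by (rule order_trans[OF _ norm_triangle_ineq4]) (simp add: algebra_simps)
        also have "norm (f (\<phi> \<epsilon> s) v - f (\<phi> 0 \<tau>) v) \<le> K1 * norm (\<phi> \<epsilon> s - \<phi> 0 \<tau>)"
          by (rule f_lipx[OF v])
        also have "norm (f (\<phi> 0 s) (u s) - f (\<phi> 0 \<tau>) (u \<tau>)) \<le> K1 * (norm (\<phi> 0 s - \<phi> 0 \<tau>) + norm (u s - u \<tau>))"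
          by (rule lip) (use ub sab a\<tau> in auto)
        also have "norm (\<phi> \<epsilon> s - \<phi> 0 \<tau>) \<le> Dn * \<epsilon> + \<eta>"
          using norm_triangle_ineq[of "\<phi> \<epsilon> s - \<phi> 0 s" "\<phi> 0 s - \<phi> 0 \<tau>"] p1 p3 by simp
        finally have "norm (G s) \<le> K1 * (Dn * \<epsilon> + \<eta>) + K1 * (\<eta> + \<eta>)"
          using p1 p2 K1 by (smt (verit, ccfv_SIG) mult_left_mono)
        also have "\<dots> = K1 * Dn * \<epsilon> + 3 * K1 * \<eta>" by (simp add: algebra_simps)
        also have "K1 * Dn * \<epsilon> \<le> \<delta> / 2"
        proof -
          have "\<epsilon> < \<delta> / (2 * (K1 * Dn + 1))" using \<epsilon>d \<epsilon>0 unfolding d_def by auto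
          then have "(K1 * Dn + 1) * \<epsilon> \<le> (K1 * Dn + 1) * (\<delta> / (2 * (K1 * Dn + 1)))"
            using K1 Dn0 by (intro mult_left_mono) auto
          also have "\<dots> = \<delta> / 2" using half_aux[of "K1 * Dn + 1" \<delta>] kd1 by simp
          finally show ?thesis using \<epsilon>0 by (simp add: algebra_simps)
        qed
        also have "3 * K1 * \<eta> \<le> \<delta> / 2"
        proof -
          have "3 * K1 * \<eta> = \<delta> * K1 / (2 * (K1 + 1))" unfolding \<eta>_def using K1 by (simp add: field_simps)
          also have "\<dots> \<le> \<delta> / 2" using K1 \<delta> by (simp add: field_simps)
          finally show ?thesis .
        qed
        finally show ?thesis unfolding G'_def using False by simp
      qed
      have iG': "G' integrable_on {m..\<tau>}"
        by (rule integrable_spike[OF iG, of "{m}"]) (auto simp: G'_def)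
      have "norm (integral {m..\<tau>} G') \<le> integral {m..\<tau>} (\<lambda>_. \<delta>)"
        by (rule integral_norm_bound_integral[OF iG' integrable_const_ivl G'b])
      also have "\<dots> = \<delta> * \<epsilon>" using am by (simp add: m_def)
      finally show ?thesis unfolding Deq using \<epsilon>0 by simp
    qed
  qed
qed

end

lemma chain_vd:
  assumes p: "(p has_vector_derivative L) (at 0 within S)"
    and F: "(F has_derivative F') (at (p 0))"
  shows "((\<lambda>\<epsilon>. F (p \<epsilon>)) has_vector_derivative F' L) (at 0 within S)"
proof -
  have F2: "(F has_derivative F') (at (p 0) within p ` S)" using F by (rule has_derivative_at_withinI)
  have "((F \<circ> p) has_derivative (F' \<circ> (\<lambda>h. h *\<^sub>R L))) (at 0 within S)"
    by (rule diff_chain_within[OF p[unfolded has_vector_derivative_def] F2])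
  moreover have "F' \<circ> (\<lambda>h. h *\<^sub>R L) = (\<lambda>h. h *\<^sub>R F' L)"
    using has_derivative_bounded_linear[OF F] by (auto simp: o_def linear_simps)
  ultimately show ?thesis by (simp add: has_vector_derivative_def o_def)
qed

definition gb :: "real \<Rightarrow> real \<Rightarrow> real \<Rightarrow> real \<Rightarrow> nat \<Rightarrow> nat \<Rightarrow> real \<Rightarrow> real \<Rightarrow> real" where
  "gb K2 K3 K4 K5 L1 L2 r q = K2 + K3 * r ^ L1 + K4 * q ^ L2 + K5 * r ^ L1 * q ^ L2"

lemma gb_mono:
  assumes "0 \<le> K3" "0 \<le> K4" "0 \<le> K5" "0 \<le> r" "r \<le> r'" "0 \<le> q" "q \<le> q'"
  shows "gb K2 K3 K4 K5 L1 L2 r q \<le> gb K2 K3 K4 K5 L1 L2 r' q'"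
proof -
  have 1: "r ^ L1 \<le> r' ^ L1" using assms by (intro power_mono) auto
  have 2: "q ^ L2 \<le> q' ^ L2" using assms by (intro power_mono) auto
  have "r ^ L1 * q ^ L2 \<le> r' ^ L1 * q' ^ L2" using 1 2 assms by (intro mult_mono) auto
  then have c: "K5 * (r ^ L1 * q ^ L2) \<le> K5 * (r' ^ L1 * q' ^ L2)" using assms by (intro mult_left_mono) auto
  have a: "K3 * r ^ L1 \<le> K3 * r' ^ L1" using 1 assms by (intro mult_left_mono) auto
  have b: "K4 * q ^ L2 \<le> K4 * q' ^ L2" using 2 assms by (intro mult_left_mono) auto
  show ?thesis using a b c unfolding gb_def mult.assoc by linarith
qed

lemma gb_nonneg: "0 \<le> K2 \<Longrightarrow> 0 \<le> K3 \<Longrightarrow> 0 \<le> K4 \<Longrightarrow> 0 \<le> K5 \<Longrightarrow> 0 \<le> r \<Longrightarrow> 0 \<le> q \<Longrightarrow> 0 \<le> gb K2 K3 K4 K5 L1 L2 r q"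
  unfolding gb_def by simp

locale hsys = odesys1 f \<rho> K1 f' for f :: "'x::euclidean_space \<Rightarrow> 'm::euclidean_space \<Rightarrow> 'x" and \<rho> K1 f' +
  fixes g :: "'x \<Rightarrow> 'y::euclidean_space \<Rightarrow> 'x" and Dg :: "'x \<Rightarrow> 'y \<Rightarrow> 'x \<Rightarrow>\<^sub>L 'x"
    and T :: nat and \<tau> :: real and v :: 'm and u :: "real \<Rightarrow> 'm" and x0 :: 'x
    and K2 K3 K4 K5 :: real and L1 L2 :: nat
  assumes T: "T \<ge> 1" and tau: "0 < \<tau>" "\<tau> < 1" and v: "norm v \<le> \<rho>"
    and uc: "ctrl 0 T u" and ul: "continuous (at_left \<tau>) u"
    and g_cont: "continuous_on UNIV (\<lambda>(x, y). g x y)"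
    and g_deriv: "\<And>x y. ((\<lambda>x. g x y) has_derivative blinfun_apply (Dg x y)) (at x)"
    and K25: "K2 \<ge> 0" "K3 \<ge> 0" "K4 \<ge> 0" "K5 \<ge> 0"
    and g_bound: "\<And>x y. norm (g x y) \<le> K2 + K3 * norm x ^ L1 + K4 * norm y ^ L2
                                      + K5 * norm x ^ L1 * norm y ^ L2"
    and Dg_bound: "\<And>x y. norm (Dg x y) \<le> K2 + K3 * norm x ^ L1 + K4 * norm y ^ L2
                                      + K5 * norm x ^ L1 * norm y ^ L2"
begin

abbreviation "W \<epsilon> \<equiv> needle u \<tau> v \<epsilon>"
abbreviation "st \<epsilon> ys i \<equiv> hyb_start f g (W \<epsilon>) ys x0 i"
abbreviation "sg \<epsilon> ys i \<equiv> hyb_seg f g (W \<epsilon>) ys x0 i"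
abbreviation "X \<epsilon> ys t \<equiv> hyb_traj f g T (W \<epsilon>) ys x0 t"
abbreviation "G r q \<equiv> gb K2 K3 K4 K5 L1 L2 r q"

definition E :: real where "E = exp K1"

lemma E1: "1 \<le> E" unfolding E_def using K1 by simp

lemma ctrlW: "ctrl 0 T (W \<epsilon>)" by (rule needle_ctrl[OF uc v])

lemma ctrlW_seg: "1 \<le> i \<Longrightarrow> i \<le> T \<Longrightarrow> ctrl (real i - 1) (real i) (W \<epsilon>)"
  by (rule ctrl_sub[OF ctrlW]) auto

lemma W_eq: "s \<ge> 1 \<Longrightarrow> \<epsilon> \<ge> 0 \<Longrightarrow> W \<epsilon> s = u s"
  using tau by (simp add: needle_def)

lemma seg_sol:
  assumes "1 \<le> i" "i \<le> T"
  shows "is_sol (real i - 1) (real i) (W \<epsilon>) (sg \<epsilon> ys i) \<and> sg \<epsilon> ys i (real i - 1) = st \<epsilon> ys i"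
  using ode_sol_char[OF ctrlW_seg[OF assms], where z="hyb_start f g (W \<epsilon>) ys x0 i"]
  unfolding hyb_seg_def by simp

lemma st_Suc: "1 \<le> i \<Longrightarrow> st \<epsilon> ys (Suc i) = g (sg \<epsilon> ys i (real i)) (ys i)"
proof -
  assume "1 \<le> i"
  then obtain j where j: "i = Suc j" by (cases i) auto
  show ?thesis unfolding j hyb_seg_def by simp
qed

lemma st_1: "st \<epsilon> ys (Suc 0) = x0" by simp

lemma X_seg:
  assumes "1 \<le> i" "i \<le> T" "real i - 1 \<le> t" "t < real i"
  shows "X \<epsilon> ys t = sg \<epsilon> ys i t"
proof -
  have "t \<noteq> real T" using assms by auto
  moreover have "nat \<lfloor>t\<rfloor> + 1 = i"
  proof -
    have "\<lfloor>t\<rfloor> = int i - 1" using assms by (intro floor_unique) auto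
    then show ?thesis using assms by auto
  qed
  ultimately show ?thesis unfolding hyb_traj_def by simp
qed

lemma X_T: "X \<epsilon> ys (real T) = st \<epsilon> ys (Suc T)"
  unfolding hyb_traj_def using st_Suc[of T] T by simp

end

context hsys begin

fun Rb :: "(nat \<Rightarrow> 'y) \<Rightarrow> nat \<Rightarrow> real" where
  "Rb ys 0 = norm x0"
| "Rb ys (Suc j) = G ((Rb ys j + C0) * E) (norm (ys (Suc j)))"

fun Db :: "(nat \<Rightarrow> 'y) \<Rightarrow> nat \<Rightarrow> real" where
  "Db ys 0 = K1 * (2 * \<rho>) * E"
| "Db ys (Suc j) = G ((Rb ys j + C0) * E) (norm (ys (Suc j))) * Db ys j * E"

lemma seg_sol':
  assumes "j < T"
  shows "is_sol (real j) (real j + 1) (W \<epsilon>) (sg \<epsilon> ys (Suc j)) \<and> sg \<epsilon> ys (Suc j) (real j) = st \<epsilon> ys (Suc j)"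
  using seg_sol[of "Suc j" \<epsilon> ys] assms by (simp add: add.commute)

lemma st_Suc': "st \<epsilon> ys (Suc (Suc j)) = g (sg \<epsilon> ys (Suc j) (real j + 1)) (ys (Suc j))"
  using st_Suc[of "Suc j" \<epsilon> ys] by (simp add: add.commute del: hyb_start.simps)

lemma C0_nonneg: "0 \<le> C0" unfolding C0_def using K1 rho by simp

lemma Rb_nonneg: "0 \<le> Rb ys j"
  by (induction j) (auto intro!: gb_nonneg K25 mult_nonneg_nonneg add_nonneg_nonneg C0_nonneg order_trans[OF zero_le_one E1])

lemma Db_nonneg: "0 \<le> Db ys j"
proof (induction j)
  case 0 then show ?case using K1 rho E1 by simp
next
  case (Suc j)
  have "0 \<le> G ((Rb ys j + C0) * E) (norm (ys (Suc j)))"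
    by (intro gb_nonneg K25 mult_nonneg_nonneg add_nonneg_nonneg C0_nonneg Rb_nonneg order_trans[OF zero_le_one E1]) auto
  then show ?case using Suc E1 by simp
qed

lemma Gmono: "0 \<le> r \<Longrightarrow> r \<le> r' \<Longrightarrow> 0 \<le> q \<Longrightarrow> q \<le> q' \<Longrightarrow> G r q \<le> G r' q'"
  by (rule gb_mono) (use K25 in auto)

lemma g_lip:
  assumes a: "norm a \<le> r" and b: "norm b \<le> r"
  shows "norm (g a y - g b y) \<le> G r (norm y) * norm (a - b)"
proof -
  have r: "0 \<le> r" using a by (meson norm_ge_zero order_trans)
  show ?thesis
  proof (rule differentiable_bound[of "cball 0 r" "\<lambda>x. g x y" "\<lambda>x. blinfun_apply (Dg x y)"])
    show "convex (cball (0::'x) r)" by simp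
    show "((\<lambda>x. g x y) has_derivative blinfun_apply (Dg x y)) (at x within cball 0 r)" for x
      by (rule has_derivative_at_withinI[OF g_deriv])
    show "onorm (blinfun_apply (Dg x y)) \<le> G r (norm y)" if "x \<in> cball 0 r" for x
    proof -
      have "onorm (blinfun_apply (Dg x y)) = norm (Dg x y)" by (simp add: norm_blinfun.rep_eq)
      also have "\<dots> \<le> G (norm x) (norm y)" using Dg_bound[of x y] by (simp add: gb_def)
      also have "\<dots> \<le> G r (norm y)" using that by (intro Gmono) auto
      finally show ?thesis .
    qed
  qed (use a b in auto)
qed

lemma bounds:
  assumes \<epsilon>: "\<epsilon> \<in> {0..\<tau>}"
  shows "j \<le> T \<Longrightarrow> norm (st \<epsilon> ys (Suc j)) \<le> Rb ys j"
    and "j < T \<Longrightarrow> t \<in> {real j..real j + 1} \<Longrightarrow> norm (sg \<epsilon> ys (Suc j) t) \<le> (Rb ys j + C0) * E"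
proof -
  have sgb: "norm (sg \<epsilon> ys (Suc j) t) \<le> (Rb ys j + C0) * E"
    if j: "j < T" and t: "t \<in> {real j..real j + 1}" and stb: "norm (st \<epsilon> ys (Suc j)) \<le> Rb ys j" for j t
  proof -
    have ss: "is_sol (real j) (real j + 1) (W \<epsilon>) (sg \<epsilon> ys (Suc j))" and s0: "sg \<epsilon> ys (Suc j) (real j) = st \<epsilon> ys (Suc j)"
      using seg_sol'[OF j] by auto
    have "norm (sg \<epsilon> ys (Suc j) t) \<le> (norm (sg \<epsilon> ys (Suc j) (real j)) + C0 * (real j + 1 - real j)) * exp (K1 * (t - real j))"
      by (rule sol_bound[OF ctrl_sub[OF ctrlW] ss t]) (use j in auto)
    also have "\<dots> \<le> (Rb ys j + C0) * E"
    proof -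
      have k: "K1 * (t - real j) \<le> K1 * 1" using K1 t by (intro mult_left_mono) auto
      have r: "0 \<le> Rb ys j + C0" using Rb_nonneg C0_nonneg by (rule add_nonneg_nonneg)
      show ?thesis unfolding s0 E_def using stb t K1 C0_nonneg k r
        by (intro mult_mono) auto
    qed
    finally show ?thesis .
  qed
  have stb: "norm (st \<epsilon> ys (Suc j)) \<le> Rb ys j" if "j \<le> T" for j
    using that
  proof (induction j)
    case 0 then show ?case by simp
  next
    case (Suc j)
    have "norm (st \<epsilon> ys (Suc (Suc j))) = norm (g (sg \<epsilon> ys (Suc j) (real j + 1)) (ys (Suc j)))"
      by (simp only: st_Suc')
    also have "\<dots> \<le> G (norm (sg \<epsilon> ys (Suc j) (real j + 1))) (norm (ys (Suc j)))"
      using g_bound by (simp add: gb_def)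
    also have "\<dots> \<le> G ((Rb ys j + C0) * E) (norm (ys (Suc j)))"
      by (intro Gmono sgb Suc) (use Suc in auto)
    finally show ?case by simp
  qed
  show "j \<le> T \<Longrightarrow> norm (st \<epsilon> ys (Suc j)) \<le> Rb ys j" by (rule stb)
  show "j < T \<Longrightarrow> t \<in> {real j..real j + 1} \<Longrightarrow> norm (sg \<epsilon> ys (Suc j) t) \<le> (Rb ys j + C0) * E"
    by (rule sgb) (auto intro: stb)
qed

lemma diffs:
  assumes \<epsilon>: "\<epsilon> \<in> {0..\<tau>}"
  shows "j < T \<Longrightarrow> t \<in> {real j..real j + 1} \<Longrightarrow> norm (sg \<epsilon> ys (Suc j) t - sg 0 ys (Suc j) t) \<le> Db ys j * \<epsilon>"
    and "Suc j \<le> T \<Longrightarrow> norm (st \<epsilon> ys (Suc (Suc j)) - st 0 ys (Suc (Suc j))) \<le> G ((Rb ys j + C0) * E) (norm (ys (Suc j))) * Db ys j * \<epsilon>"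
proof -
  have \<epsilon>0: "0 \<le> \<epsilon>" using \<epsilon> by simp
  have e0: "0 \<in> {0..\<tau>}" using tau by simp
  have std: "norm (st \<epsilon> ys (Suc (Suc j)) - st 0 ys (Suc (Suc j))) \<le> G ((Rb ys j + C0) * E) (norm (ys (Suc j))) * Db ys j * \<epsilon>"
    if j: "Suc j \<le> T" and sgd: "norm (sg \<epsilon> ys (Suc j) (real j + 1) - sg 0 ys (Suc j) (real j + 1)) \<le> Db ys j * \<epsilon>" for j
  proof -
    have tt: "real j + 1 \<in> {real j..real j + 1}" by simp
    have "norm (st \<epsilon> ys (Suc (Suc j)) - st 0 ys (Suc (Suc j)))
        = norm (g (sg \<epsilon> ys (Suc j) (real j + 1)) (ys (Suc j)) - g (sg 0 ys (Suc j) (real j + 1)) (ys (Suc j)))"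
      by (simp only: st_Suc')
    also have "\<dots> \<le> G ((Rb ys j + C0) * E) (norm (ys (Suc j))) * norm (sg \<epsilon> ys (Suc j) (real j + 1) - sg 0 ys (Suc j) (real j + 1))"
      by (rule g_lip; rule bounds(2)) (use j \<epsilon> e0 tt in auto)
    also have "\<dots> \<le> G ((Rb ys j + C0) * E) (norm (ys (Suc j))) * (Db ys j * \<epsilon>)"
      by (intro mult_left_mono sgd gb_nonneg K25 mult_nonneg_nonneg add_nonneg_nonneg C0_nonneg Rb_nonneg order_trans[OF zero_le_one E1]) auto
    finally show ?thesis by (simp add: mult.assoc)
  qed
  have sgd: "norm (sg \<epsilon> ys (Suc j) t - sg 0 ys (Suc j) t) \<le> Db ys j * \<epsilon>"
    if "j < T" "t \<in> {real j..real j + 1}" for j t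
    using that
  proof (induction j arbitrary: t)
    case 0
    have s1: "is_sol 0 1 (W \<epsilon>) (sg \<epsilon> ys 1)" and s1a: "sg \<epsilon> ys 1 0 = x0"
      using seg_sol'[of 0 \<epsilon> ys] T by auto
    have s0: "is_sol 0 1 u (sg 0 ys 1)" and s0a: "sg 0 ys 1 0 = x0"
      using seg_sol'[of 0 0 ys] T by (auto simp: needle_0)
    have "norm (sg \<epsilon> ys 1 t - sg 0 ys 1 t) \<le> K1 * (2 * \<rho> * \<epsilon>) * exp (K1 * (t - 0))"
      by (rule needle_diff[OF ctrl_sub[OF uc] v \<epsilon>0 _ _ s1 s0]) (use T \<epsilon> tau 0 s1a s0a in auto)
    also have "\<dots> \<le> K1 * (2 * \<rho> * \<epsilon>) * E"
    proof -
      have k: "K1 * (t - 0) \<le> K1 * 1" using K1 0 by (intro mult_left_mono) auto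
      show ?thesis unfolding E_def using k K1 rho \<epsilon>0 by (intro mult_left_mono) auto
    qed
    finally show ?case by (simp add: mult_ac)
  next
    case (Suc j)
    have j: "Suc j \<le> T" "Suc (Suc j) \<le> T" using Suc by auto
    have sd: "norm (st \<epsilon> ys (Suc (Suc j)) - st 0 ys (Suc (Suc j))) \<le> G ((Rb ys j + C0) * E) (norm (ys (Suc j))) * Db ys j * \<epsilon>"
      by (rule std[OF j(1) Suc.IH]) (use Suc in auto)
    have ctrl2: "ctrl (real (Suc j)) (real (Suc j) + 1) (W \<epsilon>)" "ctrl (real (Suc j)) (real (Suc j) + 1) (W 0)"
      using ctrlW_seg[OF _ j(2), of \<epsilon>] ctrlW_seg[OF _ j(2), of 0] by (auto simp: add.commute)
    have jT: "Suc j < T" using j by simp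
    have ss: "is_sol (real (Suc j)) (real (Suc j) + 1) (W \<epsilon>) (sg \<epsilon> ys (Suc (Suc j)))" and ssa: "sg \<epsilon> ys (Suc (Suc j)) (real (Suc j)) = st \<epsilon> ys (Suc (Suc j))"
      using seg_sol'[OF jT, of \<epsilon> ys] by auto
    have s0: "is_sol (real (Suc j)) (real (Suc j) + 1) (W 0) (sg 0 ys (Suc (Suc j)))" and s0a: "sg 0 ys (Suc (Suc j)) (real (Suc j)) = st 0 ys (Suc (Suc j))"
      using seg_sol'[OF jT, of 0 ys] by auto
    have "norm (sg \<epsilon> ys (Suc (Suc j)) t - sg 0 ys (Suc (Suc j)) t) \<le> (norm (st \<epsilon> ys (Suc (Suc j)) - st 0 ys (Suc (Suc j))) + K1 * 0) * exp (K1 * (t - real (Suc j)))"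
      using sol_diff[OF ctrl2 ss s0, of "\<lambda>_. 0" 0 t] Suc.prems ssa s0a W_eq \<epsilon>0 by auto
    also have "\<dots> \<le> (G ((Rb ys j + C0) * E) (norm (ys (Suc j))) * Db ys j * \<epsilon>) * E"
    proof -
      have k: "exp (K1 * (t - real (Suc j))) \<le> E"
      proof -
        have "K1 * (t - real (Suc j)) \<le> K1 * 1" using K1 Suc.prems by (intro mult_left_mono) auto
        then show ?thesis unfolding E_def by simp
      qed
      have nn: "0 \<le> G ((Rb ys j + C0) * E) (norm (ys (Suc j))) * Db ys j * \<epsilon>"
        by (rule order_trans[OF norm_ge_zero sd])
      show ?thesis using sd k nn by (intro mult_mono) auto
    qed
    finally show ?case by (simp add: mult_ac)
  qed
  show "j < T \<Longrightarrow> t \<in> {real j..real j + 1} \<Longrightarrow> norm (sg \<epsilon> ys (Suc j) t - sg 0 ys (Suc j) t) \<le> Db ys j * \<epsilon>"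
    by (rule sgd)
  show "Suc j \<le> T \<Longrightarrow> norm (st \<epsilon> ys (Suc (Suc j)) - st 0 ys (Suc (Suc j))) \<le> G ((Rb ys j + C0) * E) (norm (ys (Suc j))) * Db ys j * \<epsilon>"
    by (rule std) (auto intro: sgd)
qed

end

context hsys begin

definition RX :: "(nat \<Rightarrow> 'y) \<Rightarrow> real" where "RX ys = (\<Sum>j\<le>T. (Rb ys j + C0) * E)"
definition DX :: "(nat \<Rightarrow> 'y) \<Rightarrow> real" where "DX ys = (\<Sum>j\<le>T. Db ys j)"

lemma X_cases:
  assumes t: "t \<in> {0..real T}" and tT: "t \<noteq> real T"
  obtains j where "j < T" "real j \<le> t" "t < real j + 1" "\<And>\<epsilon>. X \<epsilon> ys t = sg \<epsilon> ys (Suc j) t"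
proof -
  define j where "j = nat \<lfloor>t\<rfloor>"
  have t0: "0 \<le> t" using t by simp
  have jl: "real j \<le> t" "t < real j + 1" unfolding j_def using t0 by linarith+
  have jT: "j < T"
  proof -
    have "t < real T" using t tT by simp
    then show ?thesis using jl by linarith
  qed
  have "X \<epsilon> ys t = sg \<epsilon> ys (Suc j) t" for \<epsilon>
    by (rule X_seg) (use jT jl in auto)
  then show ?thesis using that jT jl by blast
qed

lemma term_le_sum: "(\<And>i. i \<le> T \<Longrightarrow> 0 \<le> h i) \<Longrightarrow> j \<le> T \<Longrightarrow> h j \<le> (\<Sum>i\<le>T. h i :: real)"
  by (rule member_le_sum) auto

lemma Db_Suc_ge: "G ((Rb ys j + C0) * E) (norm (ys (Suc j))) * Db ys j \<le> Db ys (Suc j)"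
proof -
  have "0 \<le> G ((Rb ys j + C0) * E) (norm (ys (Suc j))) * Db ys j"
    by (intro mult_nonneg_nonneg gb_nonneg K25 Db_nonneg add_nonneg_nonneg C0_nonneg Rb_nonneg order_trans[OF zero_le_one E1]) auto
  then show ?thesis using E1 by (simp add: mult_le_cancel_left1 mult.assoc[symmetric] mult_le_cancel_left2 mult_le_cancel_right1 )
qed

lemma X_bound:
  assumes \<epsilon>: "\<epsilon> \<in> {0..\<tau>}" and t: "t \<in> {0..real T}"
  shows "norm (X \<epsilon> ys t) \<le> RX ys"
proof -
  have nn: "0 \<le> (Rb ys i + C0) * E" for i
    by (intro mult_nonneg_nonneg add_nonneg_nonneg Rb_nonneg C0_nonneg order_trans[OF zero_le_one E1])
  show ?thesis
  proof (cases "t = real T")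
    case True
    have "norm (X \<epsilon> ys t) \<le> Rb ys T" unfolding True X_T by (rule bounds(1)[OF \<epsilon>]) simp
    also have "\<dots> \<le> (Rb ys T + C0) * E"
    proof -
      have "Rb ys T + C0 \<le> (Rb ys T + C0) * E"
        using E1 add_nonneg_nonneg[OF Rb_nonneg C0_nonneg, of ys T] by (simp add: mult_le_cancel_left1)
      then show ?thesis using C0_nonneg by linarith
    qed
    also have "\<dots> \<le> RX ys" unfolding RX_def by (rule term_le_sum[OF nn]) simp
    finally show ?thesis .
  next
    case False
    obtain j where j: "j < T" "real j \<le> t" "t < real j + 1" "\<And>\<epsilon>. X \<epsilon> ys t = sg \<epsilon> ys (Suc j) t"
      using X_cases[OF t False] by blast
    have "norm (X \<epsilon> ys t) \<le> (Rb ys j + C0) * E" unfolding j(4) by (rule bounds(2)[OF \<epsilon>]) (use j in auto)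
    also have "\<dots> \<le> RX ys" unfolding RX_def by (rule term_le_sum[OF nn]) (use j in auto)
    finally show ?thesis .
  qed
qed

lemma X_diff:
  assumes \<epsilon>: "\<epsilon> \<in> {0..\<tau>}" and t: "t \<in> {0..real T}"
  shows "norm (X \<epsilon> ys t - X 0 ys t) \<le> DX ys * \<epsilon>"
proof -
  have \<epsilon>0: "0 \<le> \<epsilon>" using \<epsilon> by simp
  have nn: "0 \<le> Db ys i" for i by (rule Db_nonneg)
  show ?thesis
  proof (cases "t = real T")
    case True
    obtain j where Tj: "T = Suc j" using T by (cases T) auto
    have "norm (X \<epsilon> ys t - X 0 ys t) \<le> G ((Rb ys j + C0) * E) (norm (ys (Suc j))) * Db ys j * \<epsilon>"
      unfolding True X_T unfolding Tj by (rule diffs(2)[OF \<epsilon>]) (use Tj in auto)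
    also have "\<dots> \<le> Db ys T * \<epsilon>" unfolding Tj by (intro mult_right_mono Db_Suc_ge \<epsilon>0)
    also have "\<dots> \<le> DX ys * \<epsilon>" unfolding DX_def by (intro mult_right_mono term_le_sum nn \<epsilon>0) auto
    finally show ?thesis .
  next
    case False
    obtain j where j: "j < T" "real j \<le> t" "t < real j + 1" "\<And>\<epsilon>. X \<epsilon> ys t = sg \<epsilon> ys (Suc j) t"
      using X_cases[OF t False] by blast
    have "norm (X \<epsilon> ys t - X 0 ys t) \<le> Db ys j * \<epsilon>" unfolding j(4) by (rule diffs(1)[OF \<epsilon>]) (use j in auto)
    also have "\<dots> \<le> DX ys * \<epsilon>" unfolding DX_def by (intro mult_right_mono term_le_sum nn \<epsilon>0) (use j in auto)
    finally show ?thesis .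
  qed
qed

lemma seg_deriv:
  "j < T \<Longrightarrow> \<forall>t\<in>{max \<tau> (real j)..real j + 1}. \<exists>L. ((\<lambda>\<epsilon>. sg \<epsilon> ys (Suc j) t) has_vector_derivative L) (at 0 within {0..\<tau>})"
proof (induction j)
  case 0
  define \<phi> where "\<phi> \<epsilon> = sg \<epsilon> ys 1" for \<epsilon>
  have sol: "is_sol 0 1 (W \<epsilon>) (\<phi> \<epsilon>)" and st0: "\<phi> \<epsilon> 0 = x0" for \<epsilon>
    using seg_sol'[of 0 \<epsilon> ys] 0 by (auto simp: \<phi>_def)
  have u1: "ctrl 0 1 u" by (rule ctrl_sub[OF uc]) (use T in auto)
  have nd: "((\<lambda>\<epsilon>. \<phi> \<epsilon> \<tau>) has_vector_derivative (f (\<phi> 0 \<tau>) v - f (\<phi> 0 \<tau>) (u \<tau>))) (at 0 within {0..\<tau> - 0})"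
    by (rule needle_deriv[OF u1 v _ _ ul sol st0[THEN trans, OF st0[symmetric]]]) (use tau in auto)
  have "\<exists>\<Psi>. \<forall>t\<in>{\<tau>..1}. ((\<lambda>\<epsilon>. \<phi> \<epsilon> t) has_vector_derivative \<Psi> t) (at 0 within {0..\<tau>})"
  proof (rule flow_deriv[where C="Db ys 0"])
    show "\<tau> \<le> 1" "0 < \<tau>" using tau by auto
    show "ctrl \<tau> 1 u" by (rule ctrl_sub[OF u1]) (use tau in auto)
    show "is_sol \<tau> 1 u (\<phi> \<epsilon>)" if "\<epsilon> \<in> {0..\<tau>}" for \<epsilon>
    proof -
      have "is_sol \<tau> 1 (W \<epsilon>) (\<phi> \<epsilon>)"
        by (rule is_sol_restrict[OF ctrl_sub[OF ctrlW] sol]) (use tau T in auto)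
      moreover have "W \<epsilon> s = u s" if "s \<in> {\<tau>..1} - {\<tau>}" for s using that by (simp add: needle_def)
      ultimately show ?thesis using is_sol_spike[of "{\<tau>}" \<tau> 1 "W \<epsilon>" u "\<phi> \<epsilon>"] by auto
    qed
    show "norm (\<phi> \<epsilon> t - \<phi> 0 t) \<le> Db ys 0 * \<epsilon>" if "\<epsilon> \<in> {0..\<tau>}" "t \<in> {\<tau>..1}" for \<epsilon> t
      using diffs(1)[OF that(1), of 0 t ys] that 0 tau unfolding \<phi>_def by auto
    show "((\<lambda>\<epsilon>. \<phi> \<epsilon> \<tau>) has_vector_derivative (f (\<phi> 0 \<tau>) v - f (\<phi> 0 \<tau>) (u \<tau>))) (at 0 within {0..\<tau>})"
      using nd by simp
  qed
  then show ?case using tau unfolding \<phi>_def by auto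
next
  case (Suc j)
  have jT: "j < T" using Suc by simp
  obtain L where L: "((\<lambda>\<epsilon>. sg \<epsilon> ys (Suc j) (real j + 1)) has_vector_derivative L) (at 0 within {0..\<tau>})"
  proof -
    have "real j + 1 \<in> {max \<tau> (real j)..real j + 1}" using tau by auto
    then show ?thesis using Suc.IH[OF jT] that by blast
  qed
  define \<phi> where "\<phi> \<epsilon> = sg \<epsilon> ys (Suc (Suc j))" for \<epsilon>
  define a where "a = real j + 1"
  have sol: "is_sol a (a + 1) (W \<epsilon>) (\<phi> \<epsilon>)" and sta: "\<phi> \<epsilon> a = st \<epsilon> ys (Suc (Suc j))" for \<epsilon>
    using seg_sol'[OF Suc.prems, of \<epsilon> ys] unfolding \<phi>_def a_def by (auto simp: add.commute)
  have d0: "((\<lambda>\<epsilon>. \<phi> \<epsilon> a) has_vector_derivative blinfun_apply (Dg (sg 0 ys (Suc j) (real j + 1)) (ys (Suc j))) L) (at 0 within {0..\<tau>})"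
    unfolding sta st_Suc' by (rule chain_vd[OF L g_deriv])
  have uc2: "ctrl a (a + 1) u" by (rule ctrl_sub[OF uc]) (use Suc.prems in \<open>auto simp: a_def\<close>)
  have "\<exists>\<Psi>. \<forall>t\<in>{a..a + 1}. ((\<lambda>\<epsilon>. \<phi> \<epsilon> t) has_vector_derivative \<Psi> t) (at 0 within {0..\<tau>})"
  proof (rule flow_deriv[where a=a and b="a + 1" and \<phi>=\<phi> and C="Db ys (Suc j)", OF _ tau(1) uc2 _ _ d0])
    show "a \<le> a + 1" by simp
    show "is_sol a (a + 1) u (\<phi> \<epsilon>)" if "\<epsilon> \<in> {0..\<tau>}" for \<epsilon>
    proof -
      have "W \<epsilon> s = u s" if "s \<in> {a..a + 1} - {}" for s using that W_eq[of s \<epsilon>] \<open>\<epsilon> \<in> {0..\<tau>}\<close> by (auto simp: a_def)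
      then show ?thesis using is_sol_spike[of "{}" a "a + 1" "W \<epsilon>" u "\<phi> \<epsilon>"] sol[of \<epsilon>] by auto
    qed
    show "norm (\<phi> \<epsilon> t - \<phi> 0 t) \<le> Db ys (Suc j) * \<epsilon>" if "\<epsilon> \<in> {0..\<tau>}" "t \<in> {a..a + 1}" for \<epsilon> t
      using diffs(1)[OF that(1), of "Suc j" t ys] that Suc.prems unfolding \<phi>_def a_def by auto
  qed
  moreover have "max \<tau> (real (Suc j)) = a" using tau by (simp add: a_def)
  moreover have "real (Suc j) + 1 = a + 1" by (simp add: a_def)
  ultimately show ?case unfolding \<phi>_def by auto
qed

lemma X_deriv:
  assumes t: "t \<in> {\<tau>..real T}"
  shows "\<exists>L. ((\<lambda>\<epsilon>. X \<epsilon> ys t) has_vector_derivative L) (at 0 within {0..\<tau>})"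
proof (cases "t = real T")
  case True
  obtain j where Tj: "T = Suc j" using T by (cases T) auto
  obtain L where L: "((\<lambda>\<epsilon>. sg \<epsilon> ys (Suc j) (real j + 1)) has_vector_derivative L) (at 0 within {0..\<tau>})"
  proof -
    have "real j + 1 \<in> {max \<tau> (real j)..real j + 1}" using tau by auto
    then show ?thesis using seg_deriv[of j ys] Tj that by blast
  qed
  have "((\<lambda>\<epsilon>. st \<epsilon> ys (Suc (Suc j))) has_vector_derivative blinfun_apply (Dg (sg 0 ys (Suc j) (real j + 1)) (ys (Suc j))) L) (at 0 within {0..\<tau>})"
    unfolding st_Suc' by (rule chain_vd[OF L g_deriv])
  then show ?thesis unfolding True X_T unfolding Tj by blast
next
  case False
  have t0: "t \<in> {0..real T}" using t tau by auto
  obtain j where j: "j < T" "real j \<le> t" "t < real j + 1" "\<And>\<epsilon>. X \<epsilon> ys t = sg \<epsilon> ys (Suc j) t"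
    using X_cases[OF t0 False] by blast
  have "t \<in> {max \<tau> (real j)..real j + 1}" using j t by auto
  then show ?thesis unfolding j(4) using seg_deriv[OF j(1), of ys] by blast
qed

end

lemma vd_quot:
  assumes p: "(p has_vector_derivative L) (at 0 within {0..e})" and e: "0 < e"
  shows "((\<lambda>\<epsilon>. (p \<epsilon> - p 0) /\<^sub>R \<epsilon>) \<longlongrightarrow> L) (at_right 0)"
proof (rule tendstoI)
  fix \<delta> :: real assume \<delta>: "\<delta> > 0"
  obtain d where d: "d > 0" "\<And>y. y \<in> {0..e} \<Longrightarrow> \<bar>y\<bar> < d \<Longrightarrow> norm (p y - p 0 - y *\<^sub>R L) \<le> \<delta> / 2 * \<bar>y\<bar>"
    using p[unfolded rd_iff] \<delta> by (meson half_gt_zero)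
  show "\<forall>\<^sub>F \<epsilon> in at_right 0. dist ((p \<epsilon> - p 0) /\<^sub>R \<epsilon>) L < \<delta>"
    unfolding eventually_at_right_field
  proof (intro exI[of _ "min d e"] conjI allI impI)
    show "0 < min d e" using d e by simp
    fix y :: real assume y: "0 < y" "y < min d e"
    have "(p y - p 0) /\<^sub>R y - L = (p y - p 0 - y *\<^sub>R L) /\<^sub>R y" using y by (simp add: algebra_simps)
    then have "dist ((p y - p 0) /\<^sub>R y) L = norm (p y - p 0 - y *\<^sub>R L) / y" using y by (simp add: dist_norm divide_inverse mult.commute)
    also have "\<dots> \<le> \<delta> / 2 * y / y" using d(2)[of y] y by (intro divide_right_mono) auto
    also have "\<dots> < \<delta>" using y \<delta> by simp
    finally show "dist ((p y - p 0) /\<^sub>R y) L < \<delta>" .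
  qed
qed

lemma seq_at_right:
  assumes "\<And>n. en n \<in> {0<..(b::real)}" "en \<longlonglongrightarrow> 0"
  shows "filterlim en (at_right 0) sequentially"
proof -
  have p: "0 < en n" for n using assms(1)[of n] by simp
  have "\<forall>n. en n \<in> {0<..} \<and> en n \<noteq> 0" using p by (simp add: less_imp_neq[symmetric])
  then show ?thesis unfolding filterlim_at using assms(2) by (auto intro: always_eventually)
qed

locale hsysc = hsys f \<rho> K1 f' g Dg T \<tau> v u x0 K2 K3 K4 K5 L1 L2
  for f :: "'x::euclidean_space \<Rightarrow> 'm::euclidean_space \<Rightarrow> 'x" and \<rho> K1 f'
    and g :: "'x \<Rightarrow> 'y::euclidean_space \<Rightarrow> 'x" and Dg T \<tau> v u x0 K2 K3 K4 K5 L1 L2 +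
  fixes c :: "'x \<Rightarrow> 'm \<Rightarrow> real" and cx :: "'x \<Rightarrow> 'm \<Rightarrow> 'x" and K6 K7 :: real and L3 :: nat
  assumes c_cont: "continuous_on UNIV (\<lambda>(x, w). c x w)"
    and c_deriv: "\<And>x w. ((\<lambda>x. c x w) has_derivative (\<lambda>h. cx x w \<bullet> h)) (at x)"
    and K67: "K6 \<ge> 0" "K7 \<ge> 0"
    and c_bound: "\<And>x w. norm w \<le> \<rho> \<Longrightarrow> \<bar>c x w\<bar> \<le> K6 + K7 * norm x ^ L3"
    and cx_bound: "\<And>x w. norm w \<le> \<rho> \<Longrightarrow> norm (cx x w) \<le> K6 + K7 * norm x ^ L3"
begin

definition Jf :: "real \<Rightarrow> (nat \<Rightarrow> 'y) \<Rightarrow> real" where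
  "Jf \<epsilon> ys = integral {\<tau>..real T} (\<lambda>t. c (X \<epsilon> ys t) (W \<epsilon> t))"

definition Rf :: "(nat \<Rightarrow> 'y) \<Rightarrow> real" where
  "Rf ys = integral {\<tau>..real T} (\<lambda>t. cx (X 0 ys t) (W 0 t) \<bullet> Lim (at_right 0) (\<lambda>\<epsilon>. (X \<epsilon> ys t - X 0 ys t) /\<^sub>R \<epsilon>))"

definition Bc :: "(nat \<Rightarrow> 'y) \<Rightarrow> real" where "Bc ys = K6 + K7 * RX ys ^ L3"

lemma RX_nonneg: "0 \<le> RX ys"
  unfolding RX_def by (intro sum_nonneg mult_nonneg_nonneg add_nonneg_nonneg Rb_nonneg C0_nonneg order_trans[OF zero_le_one E1])

lemma DX_nonneg: "0 \<le> DX ys"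
  unfolding DX_def by (intro sum_nonneg Db_nonneg)

lemma Bc_nonneg: "0 \<le> Bc ys" unfolding Bc_def using K67 RX_nonneg by simp

lemma c_lip:
  assumes a: "norm a \<le> r" and b: "norm b \<le> r" and m: "norm m \<le> \<rho>"
  shows "\<bar>c a m - c b m\<bar> \<le> (K6 + K7 * r ^ L3) * norm (a - b)"
proof -
  have r: "0 \<le> r" using a by (meson norm_ge_zero order_trans)
  have "norm (c a m - c b m) \<le> (K6 + K7 * r ^ L3) * norm (a - b)"
  proof (rule differentiable_bound[of "cball 0 r" "\<lambda>x. c x m" "\<lambda>x h. cx x m \<bullet> h"])
    show "convex (cball (0::'x) r)" by simp
    show "((\<lambda>x. c x m) has_derivative (\<lambda>h. cx x m \<bullet> h)) (at x within cball 0 r)" for x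
      by (rule has_derivative_at_withinI[OF c_deriv])
    show "onorm (\<lambda>h. cx x m \<bullet> h) \<le> K6 + K7 * r ^ L3" if "x \<in> cball 0 r" for x
    proof (rule onorm_le)
      fix h
      have "norm (cx x m \<bullet> h) \<le> norm (cx x m) * norm h" by (simp add: Cauchy_Schwarz_ineq2)
      also have "norm (cx x m) \<le> K6 + K7 * r ^ L3"
        using cx_bound[OF m, of x] that K67 by (smt (verit) mem_cball_0 mult_left_mono norm_ge_zero power_mono)
      then have "norm (cx x m) * norm h \<le> (K6 + K7 * r ^ L3) * norm h" by (simp add: mult_right_mono)
      finally show "norm (cx x m \<bullet> h) \<le> (K6 + K7 * r ^ L3) * norm h" .
    qed
  qed (use a b in auto)
  then show ?thesis by simp
qed

lemma X_cont: "continuous_on ({0..real T} - real ` {0..T}) (X \<epsilon> ys)"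
  unfolding continuous_on_eq_continuous_within
proof
  fix t assume t: "t \<in> {0..real T} - real ` {0..T}"
  have tT: "t \<noteq> real T" using t by auto
  obtain j where j: "j < T" "real j \<le> t" "t < real j + 1" "\<And>\<epsilon>. X \<epsilon> ys t = sg \<epsilon> ys (Suc j) t"
    using X_cases[OF _ tT] t by auto
  have "t \<noteq> real j" using t j(1) by force
  then have tj: "real j < t" using j(2) by simp
  have cs: "continuous_on {real j..real j + 1} (sg \<epsilon> ys (Suc j))"
    using seg_sol'[OF j(1), of \<epsilon> ys] unfolding is_sol_def by blast
  have "continuous (at t) (sg \<epsilon> ys (Suc j))"
    by (rule continuous_on_interior[OF cs]) (use tj j in auto)
  then have c1: "continuous (at t within {0..real T} - real ` {0..T}) (sg \<epsilon> ys (Suc j))"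
    by (rule continuous_at_imp_continuous_at_within)
  show "continuous (at t within {0..real T} - real ` {0..T}) (X \<epsilon> ys)"
  proof (rule continuous_transform_within[OF c1, of "min (t - real j) (real j + 1 - t)"])
    show "0 < min (t - real j) (real j + 1 - t)" using tj j by simp
    show "t \<in> {0..real T} - real ` {0..T}" by (rule t)
    fix x' assume x': "x' \<in> {0..real T} - real ` {0..T}" "dist x' t < min (t - real j) (real j + 1 - t)"
    then have "real j < x'" "x' < real j + 1" by (auto simp: dist_real_def)
    then show "sg \<epsilon> ys (Suc j) x' = X \<epsilon> ys x'"
      by (intro X_seg[symmetric]) (use j in auto)
  qed
qed

lemma c_integrable:
  assumes w: "ctrl 0 T w" and \<epsilon>: "\<epsilon> \<in> {0..\<tau>}" and sub: "{a..b} \<subseteq> {0..real T}"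
  shows "(\<lambda>t. c (X \<epsilon> ys t) (w t)) integrable_on {a..b}"
proof -
  obtain S where S: "finite S" "continuous_on ({0..real T} - S) w" and wb: "\<forall>s\<in>{0..real T}. norm (w s) \<le> \<rho>"
    using w unfolding ctrl_def by auto
  have "(\<lambda>t. c (X \<epsilon> ys t) (w t)) integrable_on {0..real T}"
  proof (rule pc_integrable[of "S \<union> real ` {0..T}"])
    show "finite (S \<union> real ` {0..T})" using S by simp
    have "continuous_on ({0..real T} - (S \<union> real ` {0..T})) (\<lambda>t. (X \<epsilon> ys t, w t))"
      by (intro continuous_on_Pair continuous_on_subset[OF X_cont] continuous_on_subset[OF S(2)]) auto
    from continuous_on_compose2[OF c_cont this]
    show "continuous_on ({0..real T} - (S \<union> real ` {0..T})) (\<lambda>t. c (X \<epsilon> ys t) (w t))" by auto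
    fix s assume s: "s \<in> {0..real T}"
    have "norm (c (X \<epsilon> ys s) (w s)) \<le> K6 + K7 * norm (X \<epsilon> ys s) ^ L3" using c_bound wb s by simp
    also have "\<dots> \<le> Bc ys" unfolding Bc_def
      using X_bound[OF \<epsilon> s, of ys] K67 by (intro add_left_mono mult_left_mono power_mono) auto
    finally show "norm (c (X \<epsilon> ys s) (w s)) \<le> Bc ys" .
  qed
  then show ?thesis using sub by (rule integrable_on_subinterval)
qed

lemma Jf_u: "\<epsilon> \<in> {0..\<tau>} \<Longrightarrow> Jf \<epsilon> ys = integral {\<tau>..real T} (\<lambda>t. c (X \<epsilon> ys t) (u t))"
  unfolding Jf_def by (rule integral_spike[of "{\<tau>}"]) (auto simp: needle_def)

lemma pathwise:
  assumes en: "\<And>n. en n \<in> {0<..\<tau>}" "en \<longlonglongrightarrow> 0"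
  shows "(\<lambda>n. (Jf (en n) ys - Jf 0 ys) / en n) \<longlonglongrightarrow> Rf ys"
proof -
  have e0p: "0 < en n \<and> en n \<le> \<tau>" for n using en(1)[of n] by simp
  have e0: "\<And>n. en n \<in> {0..\<tau>}" "\<And>n. en n > 0" using e0p by (simp add: less_imp_le)+
  have z: "(0::real) \<in> {0..\<tau>}" using tau by simp
  have sub: "{\<tau>..real T} \<subseteq> {0..real T}" using tau by auto
  have ucT: "ctrl 0 T u" by (rule uc)
  define F where "F n t = (c (X (en n) ys t) (u t) - c (X 0 ys t) (u t)) / en n" for n t
  define Gl where "Gl t = cx (X 0 ys t) (W 0 t) \<bullet> Lim (at_right 0) (\<lambda>\<epsilon>. (X \<epsilon> ys t - X 0 ys t) /\<^sub>R \<epsilon>)" for t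
  have Fi: "F n integrable_on {\<tau>..real T}" for n
    unfolding F_def
    by (intro integrable_on_divide integrable_diff c_integrable[OF ucT e0(1) sub] c_integrable[OF ucT z sub])
  have Fq: "(Jf (en n) ys - Jf 0 ys) / en n = integral {\<tau>..real T} (F n)" for n
    unfolding Jf_u[OF e0(1)] Jf_u[OF z] F_def
    by (simp add: integral_diff[OF c_integrable[OF ucT e0(1) sub] c_integrable[OF ucT z sub]])
  have Fb: "norm (F n t) \<le> Bc ys * DX ys" if t: "t \<in> {\<tau>..real T}" for n t
  proof -
    have t0: "t \<in> {0..real T}" using t sub by auto
    have ub: "norm (u t) \<le> \<rho>" using uc t0 unfolding ctrl_def by auto
    have "\<bar>c (X (en n) ys t) (u t) - c (X 0 ys t) (u t)\<bar> \<le> Bc ys * norm (X (en n) ys t - X 0 ys t)"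
      unfolding Bc_def by (rule c_lip[OF X_bound[OF e0(1) t0] X_bound[OF z t0] ub])
    also have "\<dots> \<le> Bc ys * (DX ys * en n)"
      by (intro mult_left_mono X_diff[OF e0(1) t0] Bc_nonneg)
    finally show ?thesis unfolding F_def using e0(2)[of n]
      by (simp add: abs_divide pos_divide_le_eq mult.assoc)
  qed
  have Fc: "(\<lambda>n. F n t) \<longlonglongrightarrow> Gl t" if t: "t \<in> {\<tau>..real T}" for t
  proof -
    obtain L where L: "((\<lambda>\<epsilon>. X \<epsilon> ys t) has_vector_derivative L) (at 0 within {0..\<tau>})"
      using X_deriv[OF t] by blast
    have LL: "Lim (at_right 0) (\<lambda>\<epsilon>. (X \<epsilon> ys t - X 0 ys t) /\<^sub>R \<epsilon>) = L"
      by (rule tendsto_Lim[OF _ vd_quot[OF L tau(1)]]) simp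
    have Wt: "W 0 t = u t" by (simp add: needle_0)
    have cd: "((\<lambda>\<epsilon>. c (X \<epsilon> ys t) (u t)) has_vector_derivative cx (X 0 ys t) (u t) \<bullet> L) (at 0 within {0..\<tau>})"
      by (rule chain_vd[OF L c_deriv])
    have q: "((\<lambda>\<epsilon>. (c (X \<epsilon> ys t) (u t) - c (X 0 ys t) (u t)) /\<^sub>R \<epsilon>) \<longlongrightarrow> cx (X 0 ys t) (u t) \<bullet> L) (at_right 0)"
      using vd_quot[OF cd tau(1)] by simp
    have "(\<lambda>n. (c (X (en n) ys t) (u t) - c (X 0 ys t) (u t)) /\<^sub>R en n) \<longlonglongrightarrow> cx (X 0 ys t) (u t) \<bullet> L"
      by (rule filterlim_compose[OF q seq_at_right[OF en]])
    then show ?thesis unfolding F_def Gl_def LL Wt by (simp add: divide_inverse mult.commute)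
  qed
  have dc: "Gl integrable_on {\<tau>..real T}" "(\<lambda>n. integral {\<tau>..real T} (F n)) \<longlonglongrightarrow> integral {\<tau>..real T} Gl"
    using dominated_convergence[OF Fi integrable_const_ivl Fb Fc] by auto
  show ?thesis unfolding Fq Rf_def Gl_def[symmetric] by (rule dc(2))
qed

end

context odesys begin

lemma ode_lip:
  assumes w: "ctrl a b w" and ab: "a \<le> b"
  shows "norm (ode_sol f w a b z t - ode_sol f w a b z' t) \<le> exp (K1 * (b - a)) * norm (z - z')"
proof (cases "t \<in> {a..b}")
  case True
  have s: "is_sol a b w (ode_sol f w a b z)" "ode_sol f w a b z a = z" and
       s': "is_sol a b w (ode_sol f w a b z')" "ode_sol f w a b z' a = z'"
    using ode_sol_char[OF w ab, where z=z] ode_sol_char[OF w ab, where z=z'] by auto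
  have "norm (ode_sol f w a b z t - ode_sol f w a b z' t) \<le> (norm (z - z') + K1 * 0) * exp (K1 * (t - a))"
    using sol_diff[OF w w s(1) s'(1), of "\<lambda>_. 0" 0 t] True s(2) s'(2) by auto
  also have "\<dots> \<le> norm (z - z') * exp (K1 * (b - a))"
  proof -
    have "K1 * (t - a) \<le> K1 * (b - a)" using True K1 by (intro mult_left_mono) auto
    then show ?thesis by (simp add: mult_left_mono)
  qed
  finally show ?thesis by (simp add: mult.commute)
next
  case False
  then have "ode_sol f w a b z t = z" "ode_sol f w a b z' t = z'"
    using ode_sol_char[OF w ab, where z=z] ode_sol_char[OF w ab, where z=z'] by auto
  moreover have "1 \<le> exp (K1 * (b - a))" using K1 ab by simp
  ultimately show ?thesis by (simp add: mult_le_cancel_right1 order_trans[OF _ mult_right_mono[of 1]])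
qed

lemma ode_cont:
  assumes w: "ctrl a b w" and ab: "a \<le> b"
  shows "continuous_on UNIV (\<lambda>z. ode_sol f w a b z t)"
proof (rule lipschitz_on_continuous_on)
  show "lipschitz_on (exp (K1 * (b - a))) UNIV (\<lambda>z. ode_sol f w a b z t)"
    by (rule lipschitz_onI) (use ode_lip[OF w ab] in \<open>auto simp: dist_norm\<close>)
qed

end

context hsysc begin

lemma c_int_gen:
  assumes w: "ctrl a b w" and \<phi>: "continuous_on {a..b} \<phi>" and sub: "{a'..b'} \<subseteq> {a..b}"
  shows "(\<lambda>t. c (\<phi> t) (w t)) integrable_on {a'..b'}"
proof -
  obtain S where S: "finite S" "continuous_on ({a..b} - S) w" and wb: "\<forall>s\<in>{a..b}. norm (w s) \<le> \<rho>"
    using w unfolding ctrl_def by auto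
  have "bounded (\<phi> ` {a..b})" by (intro compact_imp_bounded compact_continuous_image \<phi>) auto
  then obtain R where R: "\<And>s. s \<in> {a..b} \<Longrightarrow> norm (\<phi> s) \<le> R" unfolding bounded_iff by blast
  have "(\<lambda>t. c (\<phi> t) (w t)) integrable_on {a..b}"
  proof (rule pc_integrable[OF S(1)])
    have "continuous_on ({a..b} - S) (\<lambda>t. (\<phi> t, w t))"
      by (intro continuous_on_Pair continuous_on_subset[OF \<phi>] S(2)) auto
    from continuous_on_compose2[OF c_cont this]
    show "continuous_on ({a..b} - S) (\<lambda>t. c (\<phi> t) (w t))" by auto
    fix s assume s: "s \<in> {a..b}"
    show "norm (c (\<phi> s) (w s)) \<le> K6 + K7 * R ^ L3"
      using c_bound[of "w s" "\<phi> s"] wb s R[OF s] K67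
      by (smt (verit, best) mult_left_mono norm_ge_zero power_mono real_norm_def)
  qed
  then show ?thesis using sub by (rule integrable_on_subinterval)
qed

definition Hj :: "real \<Rightarrow> nat \<Rightarrow> 'x \<Rightarrow> real" where
  "Hj \<epsilon> j z = integral {max \<tau> (real j)..real j + 1} (\<lambda>t. c (ode_sol f (W \<epsilon>) (real j) (real j + 1) z t) (u t))"

lemma sg_eq: "sg \<epsilon> ys (Suc j) = ode_sol f (W \<epsilon>) (real j) (real j + 1) (st \<epsilon> ys (Suc j))"
  by (simp add: hyb_seg_def add.commute)

lemma Hj_cont:
  assumes j: "j < T"
  shows "continuous_on UNIV (Hj \<epsilon> j)"
  unfolding continuous_on_iff
proof (intro ballI allI impI)
  fix z :: 'x and e :: real assume e: "0 < e"
  define a where "a = real j"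
  define \<Phi> where "\<Phi> z = ode_sol f (W \<epsilon>) a (a + 1) z" for z
  have wc: "ctrl a (a + 1) (W \<epsilon>)" by (rule ctrl_sub[OF ctrlW]) (use j in \<open>auto simp: a_def\<close>)
  have uc': "ctrl a (a + 1) u" by (rule ctrl_sub[OF uc]) (use j in \<open>auto simp: a_def\<close>)
  have ab: "a \<le> a + 1" by simp
  have sol: "is_sol a (a + 1) (W \<epsilon>) (\<Phi> z')" "\<Phi> z' a = z'" for z'
    using ode_sol_char[OF wc ab, where z=z'] unfolding \<Phi>_def by auto
  have cont: "continuous_on {a..a + 1} (\<Phi> z')" for z' using sol(1)[of z'] unfolding is_sol_def by blast
  define r where "r = (norm z + 1 + C0) * E"
  have Phb: "norm (\<Phi> z' t) \<le> r" if "norm z' \<le> norm z + 1" "t \<in> {a..a + 1}" for z' t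
  proof -
    have "norm (\<Phi> z' t) \<le> (norm (\<Phi> z' a) + C0 * (a + 1 - a)) * exp (K1 * (t - a))"
      by (rule sol_bound[OF wc sol(1) that(2)])
    also have "\<dots> \<le> (norm z + 1 + C0) * E"
    proof -
      have k: "K1 * (t - a) \<le> K1 * 1" using that K1 by (intro mult_left_mono) auto
      show ?thesis unfolding sol(2) E_def using that C0_nonneg K1 k
        by (intro mult_mono) (auto intro: add_nonneg_nonneg order_trans[OF norm_ge_zero])
    qed
    finally show ?thesis unfolding r_def .
  qed
  define Lc where "Lc = (K6 + K7 * r ^ L3) * exp (K1 * (a + 1 - a))"
  have r0: "0 \<le> r" unfolding r_def using C0_nonneg E1 by (intro mult_nonneg_nonneg add_nonneg_nonneg) auto
  have Lc: "0 \<le> Lc" unfolding Lc_def using K67 r0 by (auto intro!: mult_nonneg_nonneg add_nonneg_nonneg)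
  define d where "d = min 1 (e / (Lc + 1))"
  have d: "0 < d" using e Lc by (simp add: d_def)
  show "\<exists>d>0. \<forall>z'\<in>UNIV. dist z' z < d \<longrightarrow> dist (Hj \<epsilon> j z') (Hj \<epsilon> j z) < e"
  proof (intro exI[of _ d] conjI d ballI impI)
    fix z' assume z': "dist z' z < d"
    have nz': "norm z' \<le> norm z + 1"
      using z' norm_triangle_ineq2[of z' z] by (auto simp: d_def dist_norm)
    define I where "I = {max \<tau> a..a + 1}"
    have sub: "I \<subseteq> {a..a + 1}" unfolding I_def by auto
    have i1: "(\<lambda>t. c (\<Phi> z' t) (u t)) integrable_on I" unfolding I_def by (rule c_int_gen[OF uc' cont]) auto
    have i0: "(\<lambda>t. c (\<Phi> z t) (u t)) integrable_on I" unfolding I_def by (rule c_int_gen[OF uc' cont]) auto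
    have "dist (Hj \<epsilon> j z') (Hj \<epsilon> j z) = norm (integral I (\<lambda>t. c (\<Phi> z' t) (u t) - c (\<Phi> z t) (u t)))"
    proof -
      have h1: "Hj \<epsilon> j z' = integral I (\<lambda>t. c (\<Phi> z' t) (u t))" by (simp add: Hj_def I_def \<Phi>_def a_def)
      have h0: "Hj \<epsilon> j z = integral I (\<lambda>t. c (\<Phi> z t) (u t))" by (simp add: Hj_def I_def \<Phi>_def a_def)
      show ?thesis unfolding h1 h0 dist_real_def integral_diff[OF i1 i0] by simp
    qed
    also have "\<dots> \<le> integral I (\<lambda>t. Lc * norm (z' - z))"
    proof (rule integral_norm_bound_integral[OF integrable_diff[OF i1 i0]], goal_cases)
      case 1 show ?case unfolding I_def by (rule integrable_const_ivl)
    next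
      case (2 t)
      then have t: "t \<in> {a..a + 1}" using sub by auto
      have ut: "norm (u t) \<le> \<rho>" using uc' t unfolding ctrl_def by auto
      have "\<bar>c (\<Phi> z' t) (u t) - c (\<Phi> z t) (u t)\<bar> \<le> (K6 + K7 * r ^ L3) * norm (\<Phi> z' t - \<Phi> z t)"
        by (rule c_lip[OF Phb[OF nz' t] Phb[OF _ t] ut]) simp
      also have "\<dots> \<le> (K6 + K7 * r ^ L3) * (exp (K1 * (a + 1 - a)) * norm (z' - z))"
        unfolding \<Phi>_def using K67 r0 by (intro mult_left_mono ode_lip[OF wc ab]) auto
      finally show ?case by (simp add: Lc_def mult.assoc)
    qed
    also have "\<dots> \<le> Lc * norm (z' - z)"
    proof -
      have pq: "max \<tau> a \<le> a + 1" using tau by (auto simp: a_def)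
      have eq: "integral I (\<lambda>t. Lc * norm (z' - z)) = (a + 1 - max \<tau> a) * (Lc * norm (z' - z))"
        unfolding I_def using pq by (simp only: integral_const_real content_real) simp
      have le: "(a + 1 - max \<tau> a) * (Lc * norm (z' - z)) \<le> Lc * norm (z' - z)"
        by (rule mult_left_le_one_le) (use pq Lc in auto)
      show ?thesis using eq le by linarith
    qed
    also have "\<dots> < e"
    proof -
      have "norm (z' - z) < e / (Lc + 1)" using z' by (simp add: d_def dist_norm)
      then have "(Lc + 1) * norm (z' - z) < e" using Lc by (simp add: field_simps)
      then show ?thesis using Lc by (smt (verit) mult_right_mono norm_ge_zero)
    qed
    finally show "dist (Hj \<epsilon> j z') (Hj \<epsilon> j z) < e" .
  qed
qed

lemma Jf_split:
  assumes \<epsilon>: "\<epsilon> \<in> {0..\<tau>}"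
  shows "Jf \<epsilon> ys = (\<Sum>j<T. Hj \<epsilon> j (st \<epsilon> ys (Suc j)))"
proof -
  have z: "{0..real T} \<subseteq> {0..real T}" by simp
  have part: "integral {\<tau>..real k} (\<lambda>t. c (X \<epsilon> ys t) (u t)) = (\<Sum>j<k. Hj \<epsilon> j (st \<epsilon> ys (Suc j)))"
    if "1 \<le> k" "k \<le> T" for k
    using that
  proof (induction k rule: dec_induct)
    case base
    have "integral {\<tau>..1} (\<lambda>t. c (X \<epsilon> ys t) (u t)) = integral {\<tau>..1} (\<lambda>t. c (sg \<epsilon> ys 1 t) (u t))"
    proof (rule integral_spike[of "{1}"])
      fix t assume t: "t \<in> {\<tau>..1} - {1}"
      have "X \<epsilon> ys t = sg \<epsilon> ys 1 t" by (rule X_seg) (use t T tau in auto)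
      then show "c (sg \<epsilon> ys 1 t) (u t) = c (X \<epsilon> ys t) (u t)" by simp
    qed simp
    also have "\<dots> = Hj \<epsilon> 0 (st \<epsilon> ys (Suc 0))"
      unfolding Hj_def using tau sg_eq[of \<epsilon> ys 0] by simp
    finally show ?case by simp
  next
    case (step k)
    have k1: "k + 1 \<le> T" using step by simp
    have iX: "(\<lambda>t. c (X \<epsilon> ys t) (u t)) integrable_on {\<tau>..real (Suc k)}"
      by (rule c_integrable[OF uc \<epsilon>]) (use k1 tau in auto)
    have "integral {\<tau>..real (Suc k)} (\<lambda>t. c (X \<epsilon> ys t) (u t))
        = integral {\<tau>..real k} (\<lambda>t. c (X \<epsilon> ys t) (u t)) + integral {real k..real (Suc k)} (\<lambda>t. c (X \<epsilon> ys t) (u t))"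
      by (rule Henstock_Kurzweil_Integration.integral_combine[OF _ _ iX, symmetric]) (use step tau in auto)
    also have "integral {real k..real (Suc k)} (\<lambda>t. c (X \<epsilon> ys t) (u t)) = Hj \<epsilon> k (st \<epsilon> ys (Suc k))"
    proof -
      have "integral {real k..real (Suc k)} (\<lambda>t. c (X \<epsilon> ys t) (u t)) = integral {real k..real (Suc k)} (\<lambda>t. c (sg \<epsilon> ys (Suc k) t) (u t))"
      proof (rule integral_spike[of "{real (Suc k)}"])
        fix t assume t: "t \<in> {real k..real (Suc k)} - {real (Suc k)}"
        have "X \<epsilon> ys t = sg \<epsilon> ys (Suc k) t" by (rule X_seg) (use t k1 in auto)
        then show "c (sg \<epsilon> ys (Suc k) t) (u t) = c (X \<epsilon> ys t) (u t)" by simp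
      qed simp
      moreover have "max \<tau> (real k) = real k" using tau step by auto
      ultimately show ?thesis unfolding Hj_def sg_eq by (simp add: add.commute)
    qed
    finally show ?case using step by (simp add: lessThan_Suc)
  qed
  show ?thesis unfolding Jf_u[OF \<epsilon>] using part[of T] T by simp
qed

lemma st_meas:
  assumes Ym: "\<And>i. i \<in> {1..T} \<Longrightarrow> Y i \<in> borel_measurable M"
  shows "j \<le> T \<Longrightarrow> (\<lambda>\<omega>. st \<epsilon> (\<lambda>i. Y i \<omega>) (Suc j)) \<in> borel_measurable M"
proof (induction j)
  case 0 then show ?case by simp
next
  case (Suc j)
  have jT: "j < T" using Suc by simp
  have wc: "ctrl (real j) (real j + 1) (W \<epsilon>)" by (rule ctrl_sub[OF ctrlW]) (use jT in auto)
  have oc: "continuous_on UNIV (\<lambda>z. ode_sol f (W \<epsilon>) (real j) (real j + 1) z (real j + 1))"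
    by (rule ode_cont[OF wc]) simp
  have "continuous_on UNIV (\<lambda>p. g (ode_sol f (W \<epsilon>) (real j) (real j + 1) (fst p) (real j + 1)) (snd p))"
  proof -
    have "continuous_on UNIV (\<lambda>p::'x \<times> 'y. (ode_sol f (W \<epsilon>) (real j) (real j + 1) (fst p) (real j + 1), snd p))"
      by (intro continuous_on_Pair continuous_on_compose2[OF oc] continuous_intros) auto
    from continuous_on_compose2[OF g_cont this] show ?thesis by auto
  qed
  then have "(\<lambda>\<omega>. g (ode_sol f (W \<epsilon>) (real j) (real j + 1) (st \<epsilon> (\<lambda>i. Y i \<omega>) (Suc j)) (real j + 1)) (Y (Suc j) \<omega>)) \<in> borel_measurable M"
    by (intro borel_measurable_continuous_Pair[where H="\<lambda>x y. g (ode_sol f (W \<epsilon>) (real j) (real j + 1) x (real j + 1)) y"] Suc.IH Ym)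
       (use Suc.prems in auto)
  then show ?case unfolding st_Suc' sg_eq .
qed

lemma Jf_meas:
  assumes Ym: "\<And>i. i \<in> {1..T} \<Longrightarrow> Y i \<in> borel_measurable M" and \<epsilon>: "\<epsilon> \<in> {0..\<tau>}"
  shows "(\<lambda>\<omega>. Jf \<epsilon> (\<lambda>i. Y i \<omega>)) \<in> borel_measurable M"
  unfolding Jf_split[OF \<epsilon>]
  by (intro borel_measurable_sum borel_measurable_continuous_on[OF Hj_cont] st_meas[OF Ym]) auto

end

definition mom :: "'w measure \<Rightarrow> ('w \<Rightarrow> real) \<Rightarrow> bool" where
  "mom M h \<longleftrightarrow> h \<in> borel_measurable M \<and> (\<forall>\<omega>. 0 \<le> h \<omega>) \<and> (\<forall>k. integrable M (\<lambda>\<omega>. h \<omega> ^ k))"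

lemma pow_add_le:
  fixes a b :: real assumes "0 \<le> a" "0 \<le> b"
  shows "(a + b) ^ k \<le> 2 ^ k * (a ^ k + b ^ k)"
proof -
  have "(a + b) ^ k \<le> (2 * max a b) ^ k" using assms by (intro power_mono) auto
  also have "\<dots> = 2 ^ k * max a b ^ k" by (simp add: power_mult_distrib)
  also have "max a b ^ k \<le> a ^ k + b ^ k"
  proof (cases "a \<le> b")
    case True then show ?thesis using assms by (simp add: max_def)
  next
    case False then show ?thesis using assms by (simp add: max_def)
  qed
  finally show ?thesis by (simp add: mult_left_mono)
qed

lemma pow_mult_le:
  fixes a b :: real assumes "0 \<le> a" "0 \<le> b"
  shows "(a * b) ^ k \<le> a ^ (2 * k) + b ^ (2 * k)"
proof -
  have x: "0 \<le> a ^ k" "0 \<le> b ^ k" using assms by auto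
  have "(a * b) ^ k = a ^ k * b ^ k" by (simp add: power_mult_distrib)
  also have "\<dots> \<le> (a ^ k)\<^sup>2 + (b ^ k)\<^sup>2"
  proof -
    have e: "(a ^ k)\<^sup>2 + (b ^ k)\<^sup>2 - a ^ k * b ^ k = (a ^ k - b ^ k)\<^sup>2 + a ^ k * b ^ k"
      by (simp add: power2_eq_square algebra_simps)
    have "0 \<le> (a ^ k - b ^ k)\<^sup>2" by simp
    moreover have "0 \<le> a ^ k * b ^ k" using x by simp
    ultimately show ?thesis using e by linarith
  qed
  finally show ?thesis by (simp add: power_mult[symmetric] mult.commute)
qed

context
  fixes M :: "'w measure"
  assumes M: "prob_space M"
begin

lemma mom_const: "0 \<le> c \<Longrightarrow> mom M (\<lambda>_. c)"
  unfolding mom_def using M by (simp add: prob_space.finite_measure finite_measure.integrable_const)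

lemma mom_add:
  assumes a: "mom M h1" and b: "mom M h2"
  shows "mom M (\<lambda>\<omega>. h1 \<omega> + h2 \<omega>)"
  unfolding mom_def
proof (intro conjI allI)
  show "(\<lambda>\<omega>. h1 \<omega> + h2 \<omega>) \<in> borel_measurable M" using a b unfolding mom_def by auto
  show "0 \<le> h1 \<omega> + h2 \<omega>" for \<omega> using a b unfolding mom_def by (simp add: add_nonneg_nonneg)
  fix k
  have i: "integrable M (\<lambda>\<omega>. 2 ^ k * (h1 \<omega> ^ k + h2 \<omega> ^ k))"
    using a b unfolding mom_def by (intro Bochner_Integration.integrable_mult_right Bochner_Integration.integrable_add) auto
  show "integrable M (\<lambda>\<omega>. (h1 \<omega> + h2 \<omega>) ^ k)"
  proof (rule Bochner_Integration.integrable_bound[OF i])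
    show "(\<lambda>\<omega>. (h1 \<omega> + h2 \<omega>) ^ k) \<in> borel_measurable M" using a b unfolding mom_def by auto
    show "AE \<omega> in M. norm ((h1 \<omega> + h2 \<omega>) ^ k) \<le> norm (2 ^ k * (h1 \<omega> ^ k + h2 \<omega> ^ k))"
    proof (rule AE_I2)
      fix \<omega>
      have n: "0 \<le> h1 \<omega>" "0 \<le> h2 \<omega>" using a b unfolding mom_def by auto
      have "0 \<le> (h1 \<omega> + h2 \<omega>) ^ k" "0 \<le> 2 ^ k * (h1 \<omega> ^ k + h2 \<omega> ^ k)" using n by simp_all
      then show "norm ((h1 \<omega> + h2 \<omega>) ^ k) \<le> norm (2 ^ k * (h1 \<omega> ^ k + h2 \<omega> ^ k))"
        using pow_add_le[OF n, of k] by (simp only: real_norm_def abs_of_nonneg)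
    qed
  qed
qed

lemma mom_mult:
  assumes a: "mom M h1" and b: "mom M h2"
  shows "mom M (\<lambda>\<omega>. h1 \<omega> * h2 \<omega>)"
  unfolding mom_def
proof (intro conjI allI)
  show "(\<lambda>\<omega>. h1 \<omega> * h2 \<omega>) \<in> borel_measurable M" using a b unfolding mom_def by auto
  show "0 \<le> h1 \<omega> * h2 \<omega>" for \<omega> using a b unfolding mom_def by (simp add: mult_nonneg_nonneg)
  fix k
  have i: "integrable M (\<lambda>\<omega>. h1 \<omega> ^ (2 * k) + h2 \<omega> ^ (2 * k))"
    using a b unfolding mom_def by (intro Bochner_Integration.integrable_add) auto
  show "integrable M (\<lambda>\<omega>. (h1 \<omega> * h2 \<omega>) ^ k)"
  proof (rule Bochner_Integration.integrable_bound[OF i])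
    show "(\<lambda>\<omega>. (h1 \<omega> * h2 \<omega>) ^ k) \<in> borel_measurable M" using a b unfolding mom_def by auto
    show "AE \<omega> in M. norm ((h1 \<omega> * h2 \<omega>) ^ k) \<le> norm (h1 \<omega> ^ (2 * k) + h2 \<omega> ^ (2 * k))"
    proof (rule AE_I2)
      fix \<omega>
      have n: "0 \<le> h1 \<omega>" "0 \<le> h2 \<omega>" using a b unfolding mom_def by auto
      have "0 \<le> (h1 \<omega> * h2 \<omega>) ^ k" "0 \<le> h1 \<omega> ^ (2 * k) + h2 \<omega> ^ (2 * k)" using n by simp_all
      then show "norm ((h1 \<omega> * h2 \<omega>) ^ k) \<le> norm (h1 \<omega> ^ (2 * k) + h2 \<omega> ^ (2 * k))"
        using pow_mult_le[OF n, of k] by (simp only: real_norm_def abs_of_nonneg)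
    qed
  qed
qed

lemma mom_pow:
  assumes a: "mom M h" shows "mom M (\<lambda>\<omega>. h \<omega> ^ L)"
  using a unfolding mom_def by (auto simp: power_mult[symmetric])

lemma mom_cmult: "0 \<le> c \<Longrightarrow> mom M h \<Longrightarrow> mom M (\<lambda>\<omega>. c * h \<omega>)"
  using mom_mult[OF mom_const] by blast

lemma mom_sum: "finite I \<Longrightarrow> (\<And>i. i \<in> I \<Longrightarrow> mom M (h i)) \<Longrightarrow> mom M (\<lambda>\<omega>. \<Sum>i\<in>I. h i \<omega>)"
proof (induction I rule: finite_induct)
  case empty then show ?case using mom_const[of 0] by simp
next
  case (insert x F) then show ?case by (simp add: mom_add)
qed

lemma mom_norm:
  assumes "Z \<in> borel_measurable M" "\<And>k. integrable M (\<lambda>\<omega>. norm (Z \<omega>) ^ k)"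
  shows "mom M (\<lambda>\<omega>. norm (Z \<omega>))"
  using assms unfolding mom_def by auto

lemma mom_integrable: "mom M h \<Longrightarrow> integrable M h"
proof -
  assume "mom M h"
  then have "integrable M (\<lambda>\<omega>. h \<omega> ^ 1)" unfolding mom_def by blast
  then show ?thesis by simp
qed

lemma mom_dom:
  assumes "mom M h" "q \<in> borel_measurable M" "\<And>\<omega>. \<bar>q \<omega>\<bar> \<le> h \<omega>"
  shows "integrable M q"
proof (rule Bochner_Integration.integrable_bound[OF mom_integrable[OF assms(1)] assms(2)], rule AE_I2)
  fix \<omega>
  have "0 \<le> h \<omega>" using assms(1) unfolding mom_def by blast
  then show "norm (q \<omega>) \<le> norm (h \<omega>)" using assms(3)[of \<omega>] by simp
qed

end

context hsysc begin

context
  fixes M :: "'w measure" and Y :: "nat \<Rightarrow> 'w \<Rightarrow> 'y"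
  assumes M: "prob_space M"
    and Ym: "\<And>i. i \<in> {1..T} \<Longrightarrow> Y i \<in> borel_measurable M"
    and Ymom: "\<And>i k. i \<in> {1..T} \<Longrightarrow> integrable M (\<lambda>\<omega>. norm (Y i \<omega>) ^ k)"
begin

lemma mom_Y: "i \<in> {1..T} \<Longrightarrow> mom M (\<lambda>\<omega>. norm (Y i \<omega>))"
  by (rule mom_norm[OF M Ym Ymom])

lemma mom_G: "mom M r \<Longrightarrow> mom M q \<Longrightarrow> mom M (\<lambda>\<omega>. G (r \<omega>) (q \<omega>))"
  unfolding gb_def using K25
  by (intro mom_add[OF M] mom_cmult[OF M] mom_pow[OF M] mom_mult[OF M] mom_const[OF M]) auto

lemma mom_Rb: "j \<le> T \<Longrightarrow> mom M (\<lambda>\<omega>. Rb (\<lambda>i. Y i \<omega>) j)"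
proof (induction j)
  case 0 then show ?case by (simp add: mom_const[OF M])
next
  case (Suc j)
  have "mom M (\<lambda>\<omega>. (Rb (\<lambda>i. Y i \<omega>) j + C0) * E)"
    using mom_mult[OF M mom_add[OF M Suc.IH mom_const[OF M C0_nonneg]] mom_const[OF M order_trans[OF zero_le_one E1]]] Suc by simp
  then show ?case using mom_G mom_Y[of "Suc j"] Suc by simp
qed

lemma mom_Db: "j \<le> T \<Longrightarrow> mom M (\<lambda>\<omega>. Db (\<lambda>i. Y i \<omega>) j)"
proof (induction j)
  case 0 then show ?case using K1 rho E1 by (simp add: mom_const[OF M])
next
  case (Suc j)
  have "mom M (\<lambda>\<omega>. (Rb (\<lambda>i. Y i \<omega>) j + C0) * E)"
    using mom_mult[OF M mom_add[OF M mom_Rb mom_const[OF M C0_nonneg]] mom_const[OF M order_trans[OF zero_le_one E1]]] Suc by simp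
  then have "mom M (\<lambda>\<omega>. G ((Rb (\<lambda>i. Y i \<omega>) j + C0) * E) (norm (Y (Suc j) \<omega>)))"
    using mom_G mom_Y[of "Suc j"] Suc by simp
  then have "mom M (\<lambda>\<omega>. G ((Rb (\<lambda>i. Y i \<omega>) j + C0) * E) (norm (Y (Suc j) \<omega>)) * Db (\<lambda>i. Y i \<omega>) j * E)"
    using mom_mult[OF M mom_mult[OF M _ Suc.IH] mom_const[OF M order_trans[OF zero_le_one E1]]] Suc by simp
  then show ?case by simp
qed

lemma mom_Bc: "mom M (\<lambda>\<omega>. Bc (\<lambda>i. Y i \<omega>))"
proof -
  have "mom M (\<lambda>\<omega>. RX (\<lambda>i. Y i \<omega>))"
    unfolding RX_def
    by (intro mom_sum[OF M] mom_mult[OF M] mom_add[OF M] mom_Rb mom_const[OF M] C0_nonneg order_trans[OF zero_le_one E1]) auto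
  then show ?thesis unfolding Bc_def using K67
    by (intro mom_add[OF M] mom_cmult[OF M] mom_pow[OF M] mom_const[OF M]) auto
qed

lemma mom_BD: "mom M (\<lambda>\<omega>. (real T - \<tau>) * (Bc (\<lambda>i. Y i \<omega>) * DX (\<lambda>i. Y i \<omega>)))"
proof -
  have "mom M (\<lambda>\<omega>. DX (\<lambda>i. Y i \<omega>))"
    unfolding DX_def by (intro mom_sum[OF M] mom_Db) auto
  then show ?thesis using tau T
    by (intro mom_cmult[OF M] mom_mult[OF M mom_Bc]) auto
qed

end

end

context hsysc begin

lemma Jf_bound:
  assumes \<epsilon>: "\<epsilon> \<in> {0..\<tau>}"
  shows "\<bar>Jf \<epsilon> ys\<bar> \<le> (real T - \<tau>) * Bc ys"
proof -
  have sub: "{\<tau>..real T} \<subseteq> {0..real T}" using tau by auto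
  have "norm (Jf \<epsilon> ys) \<le> integral {\<tau>..real T} (\<lambda>t. Bc ys)"
    unfolding Jf_def
  proof (rule integral_norm_bound_integral[OF c_integrable[OF ctrlW \<epsilon> sub]], goal_cases)
    case 1 show ?case by (rule integrable_const_ivl)
  next
    case (2 t)
    then have t: "t \<in> {0..real T}" using sub by auto
    have wb: "norm (W \<epsilon> t) \<le> \<rho>" using ctrlW t unfolding ctrl_def by blast
    have "norm (c (X \<epsilon> ys t) (W \<epsilon> t)) \<le> K6 + K7 * norm (X \<epsilon> ys t) ^ L3" using c_bound[OF wb] by simp
    also have "\<dots> \<le> Bc ys" unfolding Bc_def
      using X_bound[OF \<epsilon> t, of ys] K67 by (intro add_left_mono mult_left_mono power_mono) auto
    finally show ?case .
  qed
  also have "\<dots> = (real T - \<tau>) * Bc ys" using tau T by simp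
  finally show ?thesis by simp
qed

lemma q_bound:
  assumes \<epsilon>: "\<epsilon> \<in> {0<..\<tau>}"
  shows "\<bar>(Jf \<epsilon> ys - Jf 0 ys) / \<epsilon>\<bar> \<le> (real T - \<tau>) * (Bc ys * DX ys)"
proof -
  have \<epsilon>0: "\<epsilon> \<in> {0..\<tau>}" "0 < \<epsilon>" using \<epsilon> by auto
  have z: "(0::real) \<in> {0..\<tau>}" using tau by simp
  have sub: "{\<tau>..real T} \<subseteq> {0..real T}" using tau by auto
  have i1: "(\<lambda>t. c (X \<epsilon> ys t) (u t)) integrable_on {\<tau>..real T}" by (rule c_integrable[OF uc \<epsilon>0(1) sub])
  have i0: "(\<lambda>t. c (X 0 ys t) (u t)) integrable_on {\<tau>..real T}" by (rule c_integrable[OF uc z sub])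
  have "norm (Jf \<epsilon> ys - Jf 0 ys) \<le> integral {\<tau>..real T} (\<lambda>t. Bc ys * (DX ys * \<epsilon>))"
    unfolding Jf_u[OF \<epsilon>0(1)] Jf_u[OF z] integral_diff[OF i1 i0, symmetric]
  proof (rule integral_norm_bound_integral[OF integrable_diff[OF i1 i0]], goal_cases)
    case 1 show ?case by (rule integrable_const_ivl)
  next
    case (2 t)
    then have t0: "t \<in> {0..real T}" using sub by auto
    have ub: "norm (u t) \<le> \<rho>" using uc t0 unfolding ctrl_def by auto
    have "\<bar>c (X \<epsilon> ys t) (u t) - c (X 0 ys t) (u t)\<bar> \<le> Bc ys * norm (X \<epsilon> ys t - X 0 ys t)"
      unfolding Bc_def by (rule c_lip[OF X_bound[OF \<epsilon>0(1) t0] X_bound[OF z t0] ub])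
    also have "\<dots> \<le> Bc ys * (DX ys * \<epsilon>)"
      by (intro mult_left_mono X_diff[OF \<epsilon>0(1) t0] Bc_nonneg)
    finally show ?case by simp
  qed
  also have "\<dots> = (real T - \<tau>) * (Bc ys * DX ys) * \<epsilon>" using tau T by simp
  finally show ?thesis using \<epsilon>0(2) by (simp add: abs_divide pos_divide_le_eq)
qed

lemma final_deriv:
  fixes M :: "'w measure" and Y :: "nat \<Rightarrow> 'w \<Rightarrow> 'y"
  assumes M: "prob_space M"
    and Ym: "\<And>i. i \<in> {1..T} \<Longrightarrow> Y i \<in> borel_measurable M"
    and Ymom: "\<And>i k. i \<in> {1..T} \<Longrightarrow> integrable M (\<lambda>\<omega>. norm (Y i \<omega>) ^ k)"
  shows "((\<lambda>\<epsilon>. integral\<^sup>L M (\<lambda>\<omega>. Jf \<epsilon> (\<lambda>i. Y i \<omega>))) has_real_derivative integral\<^sup>L M (\<lambda>\<omega>. Rf (\<lambda>i. Y i \<omega>))) (at 0 within {0..\<tau>})"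
  unfolding has_field_derivative_iff
proof (rule Lim_within_LIMSEQ, intro allI impI)
  fix S :: "nat \<Rightarrow> real" assume S: "(\<forall>n. S n \<noteq> 0 \<and> S n \<in> {0..\<tau>}) \<and> S \<longlonglongrightarrow> 0"
  have Sn: "S n \<in> {0<..\<tau>}" for n using S by (metis atLeastAtMost_iff greaterThanAtMost_iff less_eq_real_def)
  have S0: "S \<longlonglongrightarrow> 0" using S by blast
  have z: "(0::real) \<in> {0..\<tau>}" using tau by simp
  define w where "w \<omega> = (real T - \<tau>) * (Bc (\<lambda>i. Y i \<omega>) * DX (\<lambda>i. Y i \<omega>))" for \<omega>
  define Bj where "Bj \<omega> = (real T - \<tau>) * Bc (\<lambda>i. Y i \<omega>)" for \<omega>
  have mw: "mom M w" unfolding w_def by (rule mom_BD[OF M Ym Ymom])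
  have mBj: "mom M Bj" unfolding Bj_def using tau T by (intro mom_cmult[OF M] mom_Bc[OF M Ym Ymom]) auto
  have Jm: "(\<lambda>\<omega>. Jf \<epsilon> (\<lambda>i. Y i \<omega>)) \<in> borel_measurable M" if "\<epsilon> \<in> {0..\<tau>}" for \<epsilon>
    by (rule Jf_meas[OF Ym that])
  have Ji: "integrable M (\<lambda>\<omega>. Jf \<epsilon> (\<lambda>i. Y i \<omega>))" if "\<epsilon> \<in> {0..\<tau>}" for \<epsilon>
    by (rule mom_dom[OF M mBj Jm[OF that]]) (use Jf_bound[OF that] in \<open>simp add: Bj_def\<close>)
  define q where "q n \<omega> = (Jf (S n) (\<lambda>i. Y i \<omega>) - Jf 0 (\<lambda>i. Y i \<omega>)) / S n" for n \<omega>
  have qm: "q n \<in> borel_measurable M" for n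
  proof -
    have a: "S n \<in> {0..\<tau>}" using Sn[of n] by simp
    show ?thesis unfolding q_def
      by (intro borel_measurable_divide borel_measurable_diff Jm[OF a] Jm[OF z]) simp
  qed
  have qc: "(\<lambda>n. q n \<omega>) \<longlonglongrightarrow> Rf (\<lambda>i. Y i \<omega>)" for \<omega>
    unfolding q_def by (rule pathwise[OF Sn S0])
  have Rm: "(\<lambda>\<omega>. Rf (\<lambda>i. Y i \<omega>)) \<in> borel_measurable M"
    by (rule borel_measurable_LIMSEQ_real[OF qc qm])
  have lim: "(\<lambda>n. integral\<^sup>L M (q n)) \<longlonglongrightarrow> integral\<^sup>L M (\<lambda>\<omega>. Rf (\<lambda>i. Y i \<omega>))"
  proof (rule integral_dominated_convergence[OF Rm qm mom_integrable[OF M mw]])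
    show "AE \<omega> in M. (\<lambda>n. q n \<omega>) \<longlonglongrightarrow> Rf (\<lambda>i. Y i \<omega>)" using qc by simp
    show "AE \<omega> in M. norm (q n \<omega>) \<le> w \<omega>" for n
      unfolding q_def w_def using q_bound[OF Sn[of n]] by simp
  qed
  have eq: "(integral\<^sup>L M (\<lambda>\<omega>. Jf (S n) (\<lambda>i. Y i \<omega>)) - integral\<^sup>L M (\<lambda>\<omega>. Jf 0 (\<lambda>i. Y i \<omega>))) / (S n - 0)
      = integral\<^sup>L M (q n)" for n
    unfolding q_def
    using Ji[of "S n"] Ji[OF z] Sn[of n]
    by (simp add: Bochner_Integration.integral_diff)
  show "(\<lambda>n. (integral\<^sup>L M (\<lambda>\<omega>. Jf (S n) (\<lambda>i. Y i \<omega>)) - integral\<^sup>L M (\<lambda>\<omega>. Jf 0 (\<lambda>i. Y i \<omega>))) / (S n - 0))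
      \<longlonglongrightarrow> integral\<^sup>L M (\<lambda>\<omega>. Rf (\<lambda>i. Y i \<omega>))"
    unfolding eq by (rule lim)
qed

end

theorem proposition14:
  fixes M :: "'w measure"
    and T :: nat and \<rho> :: real
    and f :: "'x::euclidean_space \<Rightarrow> 'm::euclidean_space \<Rightarrow> 'x"
    and g :: "'x \<Rightarrow> 'y::euclidean_space \<Rightarrow> 'x"
    and Dg :: "'x \<Rightarrow> 'y \<Rightarrow> 'x \<Rightarrow>\<^sub>L 'x"
    and c :: "'x \<Rightarrow> 'm \<Rightarrow> real"
    and cx :: "'x \<Rightarrow> 'm \<Rightarrow> 'x"
    and K1 K2 K3 K4 K5 K6 K7 :: real and L1 L2 L3 :: nat
    and Y :: "nat \<Rightarrow> 'w \<Rightarrow> 'y"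
    and x0 :: 'x and \<tau> :: real and v :: 'm and u :: "real \<Rightarrow> 'm"
  assumes T_pos: "T \<ge> 1" and rho_pos: "0 < \<rho>"
    \<comment> \<open>f continuously differentiable and Lipschitz on R^nx x B(0,rho)\<close>
    and f_C1: "\<exists>f'. (\<forall>z. ((\<lambda>(x, w). f x w) has_derivative blinfun_apply (f' z)) (at z))
                    \<and> continuous_on UNIV f'"
    and K1: "K1 \<ge> 1"
    and f_lip: "\<And>x' x'' u' u''. norm u' \<le> \<rho> \<Longrightarrow> norm u'' \<le> \<rho> \<Longrightarrow>
                  norm (f x' u' - f x'' u'') \<le> K1 * (norm (x' - x'') + norm (u' - u''))"
    \<comment> \<open>g continuous, differentiable in x, polynomial growth bounds\<close>
    and g_cont: "continuous_on UNIV (\<lambda>(x, y). g x y)"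
    and g_deriv: "\<And>x y. ((\<lambda>x. g x y) has_derivative blinfun_apply (Dg x y)) (at x)"
    and K25: "K2 \<ge> 0" "K3 \<ge> 0" "K4 \<ge> 0" "K5 \<ge> 0" and L12: "L1 \<ge> 1" "L2 \<ge> 1"
    and g_bound: "\<And>x y. norm (g x y) \<le> K2 + K3 * norm x ^ L1 + K4 * norm y ^ L2
                                      + K5 * norm x ^ L1 * norm y ^ L2"
    and Dg_bound: "\<And>x y. norm (Dg x y) \<le> K2 + K3 * norm x ^ L1 + K4 * norm y ^ L2
                                      + K5 * norm x ^ L1 * norm y ^ L2"
    \<comment> \<open>c continuous, continuously differentiable in x (gradient cx), growth bounds\<close>
    and c_cont: "continuous_on UNIV (\<lambda>(x, w). c x w)"
    and c_deriv: "\<And>x w. ((\<lambda>x. c x w) has_derivative (\<lambda>h. cx x w \<bullet> h)) (at x)"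
    and cx_cont: "continuous_on UNIV (\<lambda>(x, w). cx x w)"
    and K67: "K6 \<ge> 0" "K7 \<ge> 0" and L3: "L3 \<ge> 1"
    and c_bound: "\<And>x w. norm w \<le> \<rho> \<Longrightarrow> \<bar>c x w\<bar> \<le> K6 + K7 * norm x ^ L3"
    and cx_bound: "\<And>x w. norm w \<le> \<rho> \<Longrightarrow> norm (cx x w) \<le> K6 + K7 * norm x ^ L3"
    \<comment> \<open>probability space and observations with all moments finite\<close>
    and M: "prob_space M"
    and Y_meas: "\<And>i. i \<in> {1..T} \<Longrightarrow> Y i \<in> borel_measurable M"
    and Y_mom: "\<And>i k. i \<in> {1..T} \<Longrightarrow> integrable M (\<lambda>\<omega>. norm (Y i \<omega>) ^ k)"
    \<comment> \<open>perturbation data\<close>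
    and tau: "0 < \<tau>" "\<tau> < 1"
    and v: "norm v \<le> \<rho>"
    and u: "u \<in> admissible_controls T \<rho>"
    and u_left: "continuous (at_left \<tau>) u"
  shows "((\<lambda>\<epsilon>. integral\<^sup>L M (\<lambda>\<omega>.
            integral {\<tau>..real T} (\<lambda>t. c (hyb_traj f g T (needle u \<tau> v \<epsilon>) (\<lambda>i. Y i \<omega>) x0 t)
                                        (needle u \<tau> v \<epsilon> t))))
          has_real_derivative
           integral\<^sup>L M (\<lambda>\<omega>.
            integral {\<tau>..real T} (\<lambda>t.
              cx (hyb_traj f g T u (\<lambda>i. Y i \<omega>) x0 t) (u t) \<bullet>
              Lim (at_right 0) (\<lambda>\<epsilon>. (hyb_traj f g T (needle u \<tau> v \<epsilon>) (\<lambda>i. Y i \<omega>) x0 t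
                                      - hyb_traj f g T u (\<lambda>i. Y i \<omega>) x0 t) /\<^sub>R \<epsilon>))))
         (at 0 within {0..\<tau>})"
proof -
  obtain f' where fder: "\<And>z. ((\<lambda>(x, w). f x w) has_derivative blinfun_apply (f' z)) (at z)"
    and f'c: "continuous_on UNIV f'" using f_C1 by blast
  have fcont: "continuous_on UNIV (\<lambda>(x, w). f x w)"
    by (rule continuous_at_imp_continuous_on) (auto intro: has_derivative_continuous fder)
  interpret O: odesys1 f \<rho> K1 f'
    by unfold_locales (use fcont K1 rho_pos f_lip fder f'c in auto)
  have uc: "O.ctrl 0 (real T) u"
  proof -
    have pc: "piecewise_continuous_on 0 (real T) u" and ub: "\<forall>t\<in>{0..real T}. norm (u t) \<le> \<rho>"
      using u unfolding admissible_controls_def by auto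
    obtain S where S: "finite S" "\<forall>t\<in>{0..real T} - S. continuous (at t within {0..real T}) u"
      using pc unfolding piecewise_continuous_on_def by blast
    have "continuous_on ({0..real T} - S) u"
      unfolding continuous_on_eq_continuous_within
      using S(2) by (blast intro: continuous_within_subset)
    then show ?thesis unfolding O.ctrl_def using S(1) ub by blast
  qed
  interpret H: hsysc f \<rho> K1 f' g Dg T \<tau> v u x0 K2 K3 K4 K5 L1 L2 c cx K6 K7 L3
    by unfold_locales (use T_pos tau v uc u_left g_cont g_deriv K25 g_bound Dg_bound c_cont c_deriv K67 c_bound cx_bound in auto)
  have "((\<lambda>\<epsilon>. integral\<^sup>L M (\<lambda>\<omega>. H.Jf \<epsilon> (\<lambda>i. Y i \<omega>))) has_real_derivative integral\<^sup>L M (\<lambda>\<omega>. H.Rf (\<lambda>i. Y i \<omega>))) (at 0 within {0..\<tau>})"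
    by (rule H.final_deriv[OF M Y_meas Y_mom])
  then show ?thesis unfolding H.Jf_def H.Rf_def needle_0 .
qed

end
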